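(* Let $\mathcal C$ be a small abelian (or, more generally, Quillen exact) category with a tensor product that is exact in each variable and has a tensor identity $e$. Suppose either that the tensor product is commutative, or that there is an object $c\in\mathcal C$ such that no proper thick subcategory of $\mathcal C$ contains $c$. Then the set $L_{\mathrm{thick}}(\mathcal C)$ of thick tensor ideals of $\mathcal C$, ordered by inclusion and with product $(\mathcal D_1,\mathcal D_2)\mapsto\langle\mathcal D_1\mathcal D_2\rangle$, is an ideal lattice. Moreover, a thick tensor ideal is compact in this lattice if and only if it is of the form $\langle x\rangle$ for a single object $x$.
   Context: A tensor product on an additive category $\mathcal C$ is an additive bifunctor $\otimes\colon\mathcal C\times\mathcal C\to\mathcal C$ with a natural associativity isomorphism; a tensor identity $e$ comes with natural isomorphisms $x\otimes e\cong x\cong e\otimes x$ satisfying the pentagon and triangle axioms. A subcategory $\mathcal D$ is thick if for every exact sequence $0\to x'\to x\to x''\to0$, $x\in\mathcal D$ iff $x',x''\in\mathcal D$. A tensor ideal is a full additive subcategory $\mathcal D$ with $x\otimes y\in\mathcal D$ whenever $x\in\mathcal D$ or $y\in\mathcal D$. $\langle\mathcal D_0\rangle$ denotes the smallest thick tensor ideal containing a class $\mathcal D_0$; $\mathcal D_1\mathcal D_2$ denotes the class of finite coproducts of objects $x\otimes y$ with $x\in\mathcal D_1,y\in\mathcal D_2$ (up to isomorphism). An ideal lattice is a poset $(L,\leq)$ with an associative multiplication such that: (L1) $L$ is a complete lattice; (L2) every element is a supremum of compact elements ($a$ is compact if $a\leq\sup A$ implies $a\leq\sup A'$ for some finite $A'\subseteq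 A$); (L3) multiplication distributes over binary joins on both sides; (L4) $1=\sup L$ is compact and is a two-sided identity; (L5) products of compact elements are compact. *)

theory Defs
  imports Main
begin

text \<open>Objects have type 'o, morphisms type 'm.  The category is small automatically
(objects form a set).  cmp g f is the composite g after f.\<close>

record ('o, 'm) tcat =
  Ob :: "'o set"
  Hom :: "'o \<Rightarrow> 'o \<Rightarrow> 'm set"
  cmp :: "'m \<Rightarrow> 'm \<Rightarrow> 'm"
  idm :: "'o \<Rightarrow> 'm"
  madd :: "'m \<Rightarrow> 'm \<Rightarrow> 'm"
  mzero :: "'o \<Rightarrow> 'o \<Rightarrow> 'm"
  Conf :: "'m \<Rightarrow> 'm \<Rightarrow> bool"           \<comment> \<open>conflations (admissible short exact sequences)\<close>
  tob :: "'o \<Rightarrow> 'o \<Rightarrow> 'o"            \<comment> \<open>tensor on objects\<close>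
  tmo :: "'m \<Rightarrow> 'm \<Rightarrow> 'm"            \<comment> \<open>tensor on morphisms\<close>
  asc :: "'o \<Rightarrow> 'o \<Rightarrow> 'o \<Rightarrow> 'm"      \<comment> \<open>associator (x*y)*z -> x*(y*z)\<close>
  tunit :: "'o"                        \<comment> \<open>tensor identity e\<close>
  runit :: "'o \<Rightarrow> 'm"                 \<comment> \<open>x*e -> x\<close>
  lunit :: "'o \<Rightarrow> 'm"                 \<comment> \<open>e*x -> x\<close>

definition category :: "('o,'m,'z) tcat_scheme \<Rightarrow> bool" where
  "category C \<longleftrightarrow>
     (\<forall>x y. Hom C x y \<noteq> {} \<longrightarrow> x \<in> Ob C \<and> y \<in> Ob C) \<and>
     (\<forall>x y x' y' f. f \<in> Hom C x y \<and> f \<in> Hom C x' y' \<longrightarrow> x = x' \<and> y = y') \<and>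
     (\<forall>x\<in>Ob C. idm C x \<in> Hom C x x) \<and>
     (\<forall>x y z f g. f \<in> Hom C x y \<and> g \<in> Hom C y z \<longrightarrow> cmp C g f \<in> Hom C x z) \<and>
     (\<forall>x y f. f \<in> Hom C x y \<longrightarrow> cmp C f (idm C x) = f \<and> cmp C (idm C y) f = f) \<and>
     (\<forall>w x y z f g h. f \<in> Hom C w x \<and> g \<in> Hom C x y \<and> h \<in> Hom C y z \<longrightarrow>
        cmp C h (cmp C g f) = cmp C (cmp C h g) f)"

definition preadditive :: "('o,'m,'z) tcat_scheme \<Rightarrow> bool" where
  "preadditive C \<longleftrightarrow> category C \<and>
     (\<forall>x\<in>Ob C. \<forall>y\<in>Ob C.
        mzero C x y \<in> Hom C x y \<and>
        (\<forall>f\<in>Hom C x y. \<forall>g\<in>Hom C x y. madd C f g \<in> Hom C x y \<and> madd C f g = madd C g f) \<and>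
        (\<forall>f\<in>Hom C x y. \<forall>g\<in>Hom C x y. \<forall>h\<in>Hom C x y. madd C (madd C f g) h = madd C f (madd C g h)) \<and>
        (\<forall>f\<in>Hom C x y. madd C f (mzero C x y) = f) \<and>
        (\<forall>f\<in>Hom C x y. \<exists>g\<in>Hom C x y. madd C f g = mzero C x y)) \<and>
     (\<forall>x y z f g h. f \<in> Hom C x y \<and> g \<in> Hom C x y \<and> h \<in> Hom C y z \<longrightarrow>
        cmp C h (madd C f g) = madd C (cmp C h f) (cmp C h g)) \<and>
     (\<forall>x y z f g h. f \<in> Hom C y z \<and> g \<in> Hom C y z \<and> h \<in> Hom C x y \<longrightarrow>
        cmp C (madd C f g) h = madd C (cmp C f h) (cmp C g h))"

definition iso :: "('o,'m,'z) tcat_scheme \<Rightarrow> 'm \<Rightarrow> 'o \<Rightarrow> 'o \<Rightarrow> bool" where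
  "iso C f x y \<longleftrightarrow> f \<in> Hom C x y \<and>
     (\<exists>g\<in>Hom C y x. cmp C g f = idm C x \<and> cmp C f g = idm C y)"

definition isomorphic :: "('o,'m,'z) tcat_scheme \<Rightarrow> 'o \<Rightarrow> 'o \<Rightarrow> bool" where
  "isomorphic C x y \<longleftrightarrow> (\<exists>f. iso C f x y)"

definition is_zero_obj :: "('o,'m,'z) tcat_scheme \<Rightarrow> 'o \<Rightarrow> bool" where
  "is_zero_obj C z \<longleftrightarrow> z \<in> Ob C \<and>
     (\<forall>x\<in>Ob C. (\<exists>!f. f \<in> Hom C z x) \<and> (\<exists>!f. f \<in> Hom C x z))"

definition is_coprod :: "('o,'m,'z) tcat_scheme \<Rightarrow> 'o \<Rightarrow> 'o \<Rightarrow> 'o \<Rightarrow> 'm \<Rightarrow> 'm \<Rightarrow> bool" where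
  "is_coprod C a b z i j \<longleftrightarrow> i \<in> Hom C a z \<and> j \<in> Hom C b z \<and>
     (\<forall>w\<in>Ob C. \<forall>f\<in>Hom C a w. \<forall>g\<in>Hom C b w.
        \<exists>!h. h \<in> Hom C z w \<and> cmp C h i = f \<and> cmp C h j = g)"

definition additive :: "('o,'m,'z) tcat_scheme \<Rightarrow> bool" where
  "additive C \<longleftrightarrow> preadditive C \<and> (\<exists>z. is_zero_obj C z) \<and>
     (\<forall>a\<in>Ob C. \<forall>b\<in>Ob C. \<exists>z i j. is_coprod C a b z i j)"

definition is_kernel :: "('o,'m,'z) tcat_scheme \<Rightarrow> 'm \<Rightarrow> 'o \<Rightarrow> 'o \<Rightarrow> 'm \<Rightarrow> 'o \<Rightarrow> bool" where
  "is_kernel C f x y i k \<longleftrightarrow> f \<in> Hom C x y \<and> i \<in> Hom C k x \<and> cmp C f i = mzero C k y \<and>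
     (\<forall>w\<in>Ob C. \<forall>h\<in>Hom C w x. cmp C f h = mzero C w y \<longrightarrow>
        (\<exists>!u. u \<in> Hom C w k \<and> cmp C i u = h))"

definition is_cokernel :: "('o,'m,'z) tcat_scheme \<Rightarrow> 'm \<Rightarrow> 'o \<Rightarrow> 'o \<Rightarrow> 'm \<Rightarrow> 'o \<Rightarrow> bool" where
  "is_cokernel C f x y p c \<longleftrightarrow> f \<in> Hom C x y \<and> p \<in> Hom C y c \<and> cmp C p f = mzero C x c \<and>
     (\<forall>w\<in>Ob C. \<forall>h\<in>Hom C y w. cmp C h f = mzero C x w \<longrightarrow>
        (\<exists>!u. u \<in> Hom C c w \<and> cmp C u p = h))"

definition kc_pair :: "('o,'m,'z) tcat_scheme \<Rightarrow> 'o \<Rightarrow> 'o \<Rightarrow> 'o \<Rightarrow> 'm \<Rightarrow> 'm \<Rightarrow> bool" where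
  "kc_pair C a b c i p \<longleftrightarrow> is_kernel C p b c i a \<and> is_cokernel C i a b p c"

definition conflation :: "('o,'m,'z) tcat_scheme \<Rightarrow> 'o \<Rightarrow> 'o \<Rightarrow> 'o \<Rightarrow> 'm \<Rightarrow> 'm \<Rightarrow> bool" where
  "conflation C a b c i p \<longleftrightarrow> Conf C i p \<and> i \<in> Hom C a b \<and> p \<in> Hom C b c"

definition adm_mono :: "('o,'m,'z) tcat_scheme \<Rightarrow> 'm \<Rightarrow> bool" where
  "adm_mono C i \<longleftrightarrow> (\<exists>p. Conf C i p)"

definition adm_epi :: "('o,'m,'z) tcat_scheme \<Rightarrow> 'm \<Rightarrow> bool" where
  "adm_epi C p \<longleftrightarrow> (\<exists>i. Conf C i p)"

definition is_pushout :: "('o,'m,'z) tcat_scheme \<Rightarrow> 'o \<Rightarrow> 'o \<Rightarrow> 'o \<Rightarrow> 'o \<Rightarrow> 'm \<Rightarrow> 'm \<Rightarrow> 'm \<Rightarrow> 'm \<Rightarrow> bool" where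
  "is_pushout C a b a' b' i f i' f' \<longleftrightarrow>
     i \<in> Hom C a b \<and> f \<in> Hom C a a' \<and> i' \<in> Hom C a' b' \<and> f' \<in> Hom C b b' \<and>
     cmp C f' i = cmp C i' f \<and>
     (\<forall>w\<in>Ob C. \<forall>g\<in>Hom C b w. \<forall>g'\<in>Hom C a' w. cmp C g i = cmp C g' f \<longrightarrow>
        (\<exists>!u. u \<in> Hom C b' w \<and> cmp C u f' = g \<and> cmp C u i' = g'))"

definition is_pullback :: "('o,'m,'z) tcat_scheme \<Rightarrow> 'o \<Rightarrow> 'o \<Rightarrow> 'o \<Rightarrow> 'o \<Rightarrow> 'm \<Rightarrow> 'm \<Rightarrow> 'm \<Rightarrow> 'm \<Rightarrow> bool" where
  "is_pullback C b c b' c' p f p' f' \<longleftrightarrow>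
     p \<in> Hom C b c \<and> f \<in> Hom C c' c \<and> p' \<in> Hom C b' c' \<and> f' \<in> Hom C b' b \<and>
     cmp C p f' = cmp C f p' \<and>
     (\<forall>w\<in>Ob C. \<forall>g\<in>Hom C w b. \<forall>g'\<in>Hom C w c'. cmp C p g = cmp C f g' \<longrightarrow>
        (\<exists>!u. u \<in> Hom C w b' \<and> cmp C f' u = g \<and> cmp C p' u = g'))"

text \<open>Quillen exact structure (axioms as in Buehler, Exact categories, Def. 2.1).\<close>
definition exact_structure :: "('o,'m,'z) tcat_scheme \<Rightarrow> bool" where
  "exact_structure C \<longleftrightarrow>
     (\<forall>i p. Conf C i p \<longrightarrow> (\<exists>a b c. kc_pair C a b c i p)) \<and>
     \<comment> \<open>closed under isomorphisms of kernel-cokernel pairs\<close>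
     (\<forall>a b c a' b' c' i p i' p' u v w.
        conflation C a b c i p \<and> i' \<in> Hom C a' b' \<and> p' \<in> Hom C b' c' \<and>
        iso C u a' a \<and> iso C v b' b \<and> iso C w c' c \<and>
        cmp C v i' = cmp C i u \<and> cmp C w p' = cmp C p v \<longrightarrow> Conf C i' p') \<and>
     (\<forall>x\<in>Ob C. adm_mono C (idm C x)) \<and>
     (\<forall>x\<in>Ob C. adm_epi C (idm C x)) \<and>
     (\<forall>a b c i j. i \<in> Hom C a b \<and> j \<in> Hom C b c \<and> adm_mono C i \<and> adm_mono C j \<longrightarrow>
        adm_mono C (cmp C j i)) \<and>
     (\<forall>a b c p q. p \<in> Hom C a b \<and> q \<in> Hom C b c \<and> adm_epi C p \<and> adm_epi C q \<longrightarrow>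
        adm_epi C (cmp C q p)) \<and>
     (\<forall>a b a' i f. i \<in> Hom C a b \<and> adm_mono C i \<and> f \<in> Hom C a a' \<longrightarrow>
        (\<exists>b' i' f'. is_pushout C a b a' b' i f i' f' \<and> adm_mono C i')) \<and>
     (\<forall>b c c' p f. p \<in> Hom C b c \<and> adm_epi C p \<and> f \<in> Hom C c' c \<longrightarrow>
        (\<exists>b' p' f'. is_pullback C b c b' c' p f p' f' \<and> adm_epi C p'))"

definition exact_category :: "('o,'m,'z) tcat_scheme \<Rightarrow> bool" where
  "exact_category C \<longleftrightarrow> additive C \<and> exact_structure C"

definition tensor_structure :: "('o,'m,'z) tcat_scheme \<Rightarrow> bool" where
  "tensor_structure C \<longleftrightarrow>
     (\<forall>x\<in>Ob C. \<forall>y\<in>Ob C. tob C x y \<in> Ob C) \<and>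
     (\<forall>x x' y y' f g. f \<in> Hom C x x' \<and> g \<in> Hom C y y' \<longrightarrow>
        tmo C f g \<in> Hom C (tob C x y) (tob C x' y')) \<and>
     (\<forall>x\<in>Ob C. \<forall>y\<in>Ob C. tmo C (idm C x) (idm C y) = idm C (tob C x y)) \<and>
     (\<forall>x x' x'' y y' y'' f f' g g'. f \<in> Hom C x x' \<and> f' \<in> Hom C x' x'' \<and>
        g \<in> Hom C y y' \<and> g' \<in> Hom C y' y'' \<longrightarrow>
        tmo C (cmp C f' f) (cmp C g' g) = cmp C (tmo C f' g') (tmo C f g)) \<and>
     \<comment> \<open>additivity in each variable\<close>
     (\<forall>x x' y y' f1 f2 g. f1 \<in> Hom C x x' \<and> f2 \<in> Hom C x x' \<and> g \<in> Hom C y y' \<longrightarrow>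
        tmo C (madd C f1 f2) g = madd C (tmo C f1 g) (tmo C f2 g)) \<and>
     (\<forall>x x' y y' f g1 g2. f \<in> Hom C x x' \<and> g1 \<in> Hom C y y' \<and> g2 \<in> Hom C y y' \<longrightarrow>
        tmo C f (madd C g1 g2) = madd C (tmo C f g1) (tmo C f g2)) \<and>
     \<comment> \<open>natural associativity isomorphism\<close>
     (\<forall>x\<in>Ob C. \<forall>y\<in>Ob C. \<forall>z\<in>Ob C.
        iso C (asc C x y z) (tob C (tob C x y) z) (tob C x (tob C y z))) \<and>
     (\<forall>x x' y y' z z' f g h. f \<in> Hom C x x' \<and> g \<in> Hom C y y' \<and> h \<in> Hom C z z' \<longrightarrow>
        cmp C (asc C x' y' z') (tmo C (tmo C f g) h) =
        cmp C (tmo C f (tmo C g h)) (asc C x y z)) \<and>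
     \<comment> \<open>tensor identity\<close>
     tunit C \<in> Ob C \<and>
     (\<forall>x\<in>Ob C. iso C (runit C x) (tob C x (tunit C)) x \<and>
                iso C (lunit C x) (tob C (tunit C) x) x) \<and>
     (\<forall>x x' f. f \<in> Hom C x x' \<longrightarrow>
        cmp C (runit C x') (tmo C f (idm C (tunit C))) = cmp C f (runit C x) \<and>
        cmp C (lunit C x') (tmo C (idm C (tunit C)) f) = cmp C f (lunit C x)) \<and>
     \<comment> \<open>pentagon\<close>
     (\<forall>x\<in>Ob C. \<forall>y\<in>Ob C. \<forall>z\<in>Ob C. \<forall>w\<in>Ob C.
        cmp C (asc C x y (tob C z w)) (asc C (tob C x y) z w) =
        cmp C (tmo C (idm C x) (asc C y z w))
          (cmp C (asc C x (tob C y z) w) (tmo C (asc C x y z) (idm C w)))) \<and>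
     \<comment> \<open>triangle\<close>
     (\<forall>x\<in>Ob C. \<forall>y\<in>Ob C.
        cmp C (tmo C (idm C x) (lunit C y)) (asc C x (tunit C) y) =
        tmo C (runit C x) (idm C y)) \<and>
     \<comment> \<open>exact in each variable: preserves conflations\<close>
     (\<forall>i p y. (\<exists>a b c. conflation C a b c i p) \<and> y \<in> Ob C \<longrightarrow>
        Conf C (tmo C i (idm C y)) (tmo C p (idm C y)) \<and>
        Conf C (tmo C (idm C y) i) (tmo C (idm C y) p))"

definition exact_tensor_category :: "('o,'m,'z) tcat_scheme \<Rightarrow> bool" where
  "exact_tensor_category C \<longleftrightarrow> exact_category C \<and> tensor_structure C"

definition tensor_commutative :: "('o,'m,'z) tcat_scheme \<Rightarrow> bool" where
  "tensor_commutative C \<longleftrightarrow> (\<exists>\<sigma>.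
     (\<forall>x\<in>Ob C. \<forall>y\<in>Ob C. iso C (\<sigma> x y) (tob C x y) (tob C y x)) \<and>
     (\<forall>x x' y y' f g. f \<in> Hom C x x' \<and> g \<in> Hom C y y' \<longrightarrow>
        cmp C (\<sigma> x' y') (tmo C f g) = cmp C (tmo C g f) (\<sigma> x y)))"

section \<open>Thick tensor ideals\<close>

definition thick :: "('o,'m,'z) tcat_scheme \<Rightarrow> 'o set \<Rightarrow> bool" where
  "thick C D \<longleftrightarrow> D \<subseteq> Ob C \<and>
     (\<forall>a b c i p. conflation C a b c i p \<longrightarrow> (b \<in> D \<longleftrightarrow> a \<in> D \<and> c \<in> D))"

definition additive_subcat :: "('o,'m,'z) tcat_scheme \<Rightarrow> 'o set \<Rightarrow> bool" where
  "additive_subcat C D \<longleftrightarrow> D \<subseteq> Ob C \<and> (\<exists>z\<in>D. is_zero_obj C z) \<and>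
     (\<forall>a b z i j. a \<in> D \<and> b \<in> D \<and> is_coprod C a b z i j \<longrightarrow> z \<in> D)"

definition tensor_ideal :: "('o,'m,'z) tcat_scheme \<Rightarrow> 'o set \<Rightarrow> bool" where
  "tensor_ideal C D \<longleftrightarrow> additive_subcat C D \<and>
     (\<forall>x\<in>Ob C. \<forall>y\<in>Ob C. x \<in> D \<or> y \<in> D \<longrightarrow> tob C x y \<in> D)"

definition thick_tensor_ideal :: "('o,'m,'z) tcat_scheme \<Rightarrow> 'o set \<Rightarrow> bool" where
  "thick_tensor_ideal C D \<longleftrightarrow> thick C D \<and> tensor_ideal C D"

definition gen :: "('o,'m,'z) tcat_scheme \<Rightarrow> 'o set \<Rightarrow> 'o set" where
  "gen C D0 = \<Inter>{D. thick_tensor_ideal C D \<and> D0 \<subseteq> D}"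

inductive_set fincop :: "('o,'m,'z) tcat_scheme \<Rightarrow> 'o set \<Rightarrow> 'o set"
  for C :: "('o,'m,'z) tcat_scheme" and S :: "'o set" where
  zero: "is_zero_obj C z \<Longrightarrow> z \<in> fincop C S"
| step: "a \<in> fincop C S \<Longrightarrow> b \<in> S \<Longrightarrow> is_coprod C a b z i j \<Longrightarrow> z \<in> fincop C S"

definition tprod_class :: "('o,'m,'z) tcat_scheme \<Rightarrow> 'o set \<Rightarrow> 'o set \<Rightarrow> 'o set" where
  "tprod_class C D1 D2 = fincop C {tob C x y | x y. x \<in> D1 \<and> y \<in> D2}"

definition tprod :: "('o,'m,'z) tcat_scheme \<Rightarrow> 'o set \<Rightarrow> 'o set \<Rightarrow> 'o set" where
  "tprod C D1 D2 = gen C (tprod_class C D1 D2)"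

definition Lthick :: "('o,'m,'z) tcat_scheme \<Rightarrow> 'o set set" where
  "Lthick C = {D. thick_tensor_ideal C D}"

section \<open>Ideal lattices (on a carrier set L with order le and multiplication mult)\<close>

definition is_sup :: "'a set \<Rightarrow> ('a \<Rightarrow> 'a \<Rightarrow> bool) \<Rightarrow> 'a set \<Rightarrow> 'a \<Rightarrow> bool" where
  "is_sup L le A s \<longleftrightarrow> s \<in> L \<and> (\<forall>a\<in>A. le a s) \<and> (\<forall>b\<in>L. (\<forall>a\<in>A. le a b) \<longrightarrow> le s b)"

definition lsup :: "'a set \<Rightarrow> ('a \<Rightarrow> 'a \<Rightarrow> bool) \<Rightarrow> 'a set \<Rightarrow> 'a" where
  "lsup L le A = (THE s. is_sup L le A s)"

definition poset_on :: "'a set \<Rightarrow> ('a \<Rightarrow> 'a \<Rightarrow> bool) \<Rightarrow> bool" where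
  "poset_on L le \<longleftrightarrow> (\<forall>a\<in>L. le a a) \<and> (\<forall>a\<in>L. \<forall>b\<in>L. le a b \<and> le b a \<longrightarrow> a = b) \<and>
     (\<forall>a\<in>L. \<forall>b\<in>L. \<forall>c\<in>L. le a b \<and> le b c \<longrightarrow> le a c)"

definition compact_el :: "'a set \<Rightarrow> ('a \<Rightarrow> 'a \<Rightarrow> bool) \<Rightarrow> 'a \<Rightarrow> bool" where
  "compact_el L le a \<longleftrightarrow> a \<in> L \<and>
     (\<forall>A. A \<subseteq> L \<and> le a (lsup L le A) \<longrightarrow> (\<exists>A'. A' \<subseteq> A \<and> finite A' \<and> le a (lsup L le A')))"

definition ideal_lattice :: "'a set \<Rightarrow> ('a \<Rightarrow> 'a \<Rightarrow> bool) \<Rightarrow> ('a \<Rightarrow> 'a \<Rightarrow> 'a) \<Rightarrow> bool" where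
  "ideal_lattice L le mult \<longleftrightarrow>
     poset_on L le \<and>
     (\<forall>a\<in>L. \<forall>b\<in>L. mult a b \<in> L) \<and>
     (\<forall>a\<in>L. \<forall>b\<in>L. \<forall>c\<in>L. mult (mult a b) c = mult a (mult b c)) \<and>
     \<comment> \<open>(L1) complete lattice\<close>
     (\<forall>A. A \<subseteq> L \<longrightarrow> (\<exists>s. is_sup L le A s)) \<and>
     \<comment> \<open>(L2) every element is a supremum of compact elements\<close>
     (\<forall>a\<in>L. \<exists>A. A \<subseteq> {c. compact_el L le c} \<and> a = lsup L le A) \<and>
     \<comment> \<open>(L3) distributivity over binary joins\<close>
     (\<forall>a\<in>L. \<forall>b\<in>L. \<forall>c\<in>L.
        mult a (lsup L le {b, c}) = lsup L le {mult a b, mult a c} \<and>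
        mult (lsup L le {a, b}) c = lsup L le {mult a c, mult b c}) \<and>
     \<comment> \<open>(L4) 1 = sup L is compact and a two-sided identity\<close>
     compact_el L le (lsup L le L) \<and>
     (\<forall>a\<in>L. mult (lsup L le L) a = a \<and> mult a (lsup L le L) = a) \<and>
     \<comment> \<open>(L5) products of compact elements are compact\<close>
     (\<forall>a b. compact_el L le a \<and> compact_el L le b \<longrightarrow> compact_el L le (mult a b))"

end

theory Submission
  imports Defs
begin

locale ETC =
  fixes C :: "('o,'m) tcat"
  assumes etc: "exact_tensor_category C"
begin
lemma pre: "preadditive C" and addc: "additive C"
  and exs: "exact_structure C" and ten: "tensor_structure C"
  using etc unfolding exact_tensor_category_def exact_category_def additive_def
  by simp_all
lemma cat: "category C" using pre unfolding preadditive_def by simp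

lemmas CA = cat[unfolded category_def]
lemmas C1 = CA[THEN conjunct1]
lemmas C2 = CA[THEN conjunct2, THEN conjunct1]
lemmas C3 = CA[THEN conjunct2, THEN conjunct2, THEN conjunct1]
lemmas C4 = CA[THEN conjunct2, THEN conjunct2, THEN conjunct2, THEN conjunct1]
lemmas C5 = CA[THEN conjunct2, THEN conjunct2, THEN conjunct2, THEN conjunct2, THEN conjunct1]
lemmas C6 = CA[THEN conjunct2, THEN conjunct2, THEN conjunct2, THEN conjunct2, THEN conjunct2]

lemma hom_ob1: "f \<in> Hom C x y \<Longrightarrow> x \<in> Ob C" using C1 by blast
lemma hom_ob2: "f \<in> Hom C x y \<Longrightarrow> y \<in> Ob C" using C1 by blast
lemma hom_uniq1: "f \<in> Hom C x y \<Longrightarrow> f \<in> Hom C x' y' \<Longrightarrow> x = x'" using C2 by blast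
lemma hom_uniq2: "f \<in> Hom C x y \<Longrightarrow> f \<in> Hom C x' y' \<Longrightarrow> y = y'" using C2 by blast
lemma id_hom: "x \<in> Ob C \<Longrightarrow> idm C x \<in> Hom C x x" using C3 by blast
lemma comp_hom: "f \<in> Hom C x y \<Longrightarrow> g \<in> Hom C y z \<Longrightarrow> cmp C g f \<in> Hom C x z" using C4 by blast
lemma comp_id_r: "f \<in> Hom C x y \<Longrightarrow> cmp C f (idm C x) = f" using C5 by blast
lemma comp_id_l: "f \<in> Hom C x y \<Longrightarrow> cmp C (idm C y) f = f" using C5 by blast
lemma comp_assoc: "f \<in> Hom C w x \<Longrightarrow> g \<in> Hom C x y \<Longrightarrow> h \<in> Hom C y z \<Longrightarrow>
   cmp C h (cmp C g f) = cmp C (cmp C h g) f" using C6 by blast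

lemmas PA = pre[unfolded preadditive_def]
lemmas P2 = PA[THEN conjunct2, THEN conjunct1]
lemmas P3 = PA[THEN conjunct2, THEN conjunct2, THEN conjunct1]
lemmas P4 = PA[THEN conjunct2, THEN conjunct2, THEN conjunct2]

lemma P2': "x \<in> Ob C \<Longrightarrow> y \<in> Ob C \<Longrightarrow> mzero C x y \<in> Hom C x y \<and>
        (\<forall>f\<in>Hom C x y. \<forall>g\<in>Hom C x y. madd C f g \<in> Hom C x y \<and> madd C f g = madd C g f) \<and>
        (\<forall>f\<in>Hom C x y. \<forall>g\<in>Hom C x y. \<forall>h\<in>Hom C x y. madd C (madd C f g) h = madd C f (madd C g h)) \<and>
        (\<forall>f\<in>Hom C x y. madd C f (mzero C x y) = f) \<and>
        (\<forall>f\<in>Hom C x y. \<exists>g\<in>Hom C x y. madd C f g = mzero C x y)"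
  using P2 by blast

lemma zero_hom: "x \<in> Ob C \<Longrightarrow> y \<in> Ob C \<Longrightarrow> mzero C x y \<in> Hom C x y"
  using P2' by blast
lemma add_hom: "f \<in> Hom C x y \<Longrightarrow> g \<in> Hom C x y \<Longrightarrow> madd C f g \<in> Hom C x y"
  using P2'[OF hom_ob1 hom_ob2] by blast
lemma add_comm: "f \<in> Hom C x y \<Longrightarrow> g \<in> Hom C x y \<Longrightarrow> madd C f g = madd C g f"
  using P2'[OF hom_ob1 hom_ob2] by blast
lemma add_assoc: "f \<in> Hom C x y \<Longrightarrow> g \<in> Hom C x y \<Longrightarrow> h \<in> Hom C x y \<Longrightarrow>
   madd C (madd C f g) h = madd C f (madd C g h)"
  using P2'[OF hom_ob1 hom_ob2] by blast
lemma add_zero: "f \<in> Hom C x y \<Longrightarrow> madd C f (mzero C x y) = f"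
  using P2'[OF hom_ob1 hom_ob2] by blast
lemma add_inv: "f \<in> Hom C x y \<Longrightarrow> \<exists>g\<in>Hom C x y. madd C f g = mzero C x y"
  using P2'[OF hom_ob1 hom_ob2] by blast
lemma distl: "f \<in> Hom C x y \<Longrightarrow> g \<in> Hom C x y \<Longrightarrow> h \<in> Hom C y z \<Longrightarrow>
        cmp C h (madd C f g) = madd C (cmp C h f) (cmp C h g)"
  using P3 by blast
lemma distr: "f \<in> Hom C y z \<Longrightarrow> g \<in> Hom C y z \<Longrightarrow> h \<in> Hom C x y \<Longrightarrow>
        cmp C (madd C f g) h = madd C (cmp C f h) (cmp C g h)"
  using P4 by blast

lemma add_zero_l: "f \<in> Hom C x y \<Longrightarrow> madd C (mzero C x y) f = f"
  by (metis add_comm add_zero zero_hom hom_ob1 hom_ob2)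

lemma idem_zero: assumes "t \<in> Hom C x y" "madd C t t = t" shows "t = mzero C x y"
proof -
  obtain g where g: "g \<in> Hom C x y" "madd C t g = mzero C x y" using add_inv assms(1) by blast
  have "t = madd C t (mzero C x y)" using add_zero assms(1) by simp
  also have "\<dots> = madd C t (madd C t g)" using g by simp
  also have "\<dots> = madd C (madd C t t) g" using add_assoc assms(1) g(1) by simp
  also have "\<dots> = mzero C x y" using assms(2) g by simp
  finally show ?thesis .
qed

lemma comp_zero_l: assumes "h \<in> Hom C x y" "z \<in> Ob C"
  shows "cmp C (mzero C y z) h = mzero C x z"
proof -
  have z0: "mzero C y z \<in> Hom C y z" using zero_hom hom_ob2 assms by blast
  have "cmp C (mzero C y z) h = cmp C (madd C (mzero C y z) (mzero C y z)) h"
    using add_zero z0 by simp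
  also have "\<dots> = madd C (cmp C (mzero C y z) h) (cmp C (mzero C y z) h)"
    using distr z0 assms by blast
  finally show ?thesis using idem_zero comp_hom z0 assms by metis
qed

lemma comp_zero_r: assumes "h \<in> Hom C y z" "x \<in> Ob C"
  shows "cmp C h (mzero C x y) = mzero C x z"
proof -
  have z0: "mzero C x y \<in> Hom C x y" using zero_hom hom_ob1 assms by blast
  have "cmp C h (mzero C x y) = cmp C h (madd C (mzero C x y) (mzero C x y))"
    using add_zero z0 by simp
  also have "\<dots> = madd C (cmp C h (mzero C x y)) (cmp C h (mzero C x y))"
    using distl z0 assms by blast
  finally show ?thesis using idem_zero comp_hom z0 assms by metis
qed

lemmas TA = ten[unfolded tensor_structure_def]
lemmas T1 = TA[THEN conjunct1]
lemmas T2 = TA[THEN conjunct2, THEN conjunct1]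
lemmas T3 = TA[THEN conjunct2, THEN conjunct2, THEN conjunct1]
lemmas T4 = TA[THEN conjunct2, THEN conjunct2, THEN conjunct2, THEN conjunct1]
lemmas T5 = TA[THEN conjunct2, THEN conjunct2, THEN conjunct2, THEN conjunct2, THEN conjunct1]
lemmas T6 = TA[THEN conjunct2, THEN conjunct2, THEN conjunct2, THEN conjunct2, THEN conjunct2, THEN conjunct1]
lemmas T7 = TA[THEN conjunct2, THEN conjunct2, THEN conjunct2, THEN conjunct2, THEN conjunct2, THEN conjunct2, THEN conjunct1]
lemmas T9 = TA[THEN conjunct2, THEN conjunct2, THEN conjunct2, THEN conjunct2, THEN conjunct2, THEN conjunct2, THEN conjunct2, THEN conjunct2, THEN conjunct1]
lemmas T10 = TA[THEN conjunct2, THEN conjunct2, THEN conjunct2, THEN conjunct2, THEN conjunct2, THEN conjunct2, THEN conjunct2, THEN conjunct2, THEN conjunct2, THEN conjunct1]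
lemmas T14 = TA[THEN conjunct2, THEN conjunct2, THEN conjunct2, THEN conjunct2, THEN conjunct2, THEN conjunct2, THEN conjunct2, THEN conjunct2, THEN conjunct2, THEN conjunct2, THEN conjunct2, THEN conjunct2, THEN conjunct2]

lemma tob_ob: "x \<in> Ob C \<Longrightarrow> y \<in> Ob C \<Longrightarrow> tob C x y \<in> Ob C"
  using T1 by blast
lemma tmo_hom: "f \<in> Hom C x x' \<Longrightarrow> g \<in> Hom C y y' \<Longrightarrow> tmo C f g \<in> Hom C (tob C x y) (tob C x' y')"
  using T2 by blast
lemma tmo_id: "x \<in> Ob C \<Longrightarrow> y \<in> Ob C \<Longrightarrow> tmo C (idm C x) (idm C y) = idm C (tob C x y)"
  using T3 by blast
lemma tmo_comp: "f \<in> Hom C x x' \<Longrightarrow> f' \<in> Hom C x' x'' \<Longrightarrow> g \<in> Hom C y y' \<Longrightarrow> g' \<in> Hom C y' y'' \<Longrightarrow>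
        tmo C (cmp C f' f) (cmp C g' g) = cmp C (tmo C f' g') (tmo C f g)"
  using T4 by blast
lemma tmo_add_l: "f1 \<in> Hom C x x' \<Longrightarrow> f2 \<in> Hom C x x' \<Longrightarrow> g \<in> Hom C y y' \<Longrightarrow>
        tmo C (madd C f1 f2) g = madd C (tmo C f1 g) (tmo C f2 g)"
  using T5 by blast
lemma tmo_add_r: "f \<in> Hom C x x' \<Longrightarrow> g1 \<in> Hom C y y' \<Longrightarrow> g2 \<in> Hom C y y' \<Longrightarrow>
        tmo C f (madd C g1 g2) = madd C (tmo C f g1) (tmo C f g2)"
  using T6 by blast
lemma asc_iso: "x \<in> Ob C \<Longrightarrow> y \<in> Ob C \<Longrightarrow> z \<in> Ob C \<Longrightarrow>
        iso C (asc C x y z) (tob C (tob C x y) z) (tob C x (tob C y z))"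
  using T7 by blast
lemma unit_ob: "tunit C \<in> Ob C"
  using T9 by blast
lemma runit_iso: "x \<in> Ob C \<Longrightarrow> iso C (runit C x) (tob C x (tunit C)) x"
  using T10 by blast
lemma lunit_iso: "x \<in> Ob C \<Longrightarrow> iso C (lunit C x) (tob C (tunit C) x) x"
  using T10 by blast
lemma tex_r: "conflation C a b c i p \<Longrightarrow> y \<in> Ob C \<Longrightarrow>
        Conf C (tmo C i (idm C y)) (tmo C p (idm C y))"
  using T14 by blast
lemma tex_l: "conflation C a b c i p \<Longrightarrow> y \<in> Ob C \<Longrightarrow>
        Conf C (tmo C (idm C y) i) (tmo C (idm C y) p)"
  using T14 by blast


lemmas EA = exs[unfolded exact_structure_def]
lemmas E1 = EA[THEN conjunct1]
lemmas E2 = EA[THEN conjunct2, THEN conjunct1]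
lemmas E3 = EA[THEN conjunct2, THEN conjunct2, THEN conjunct1]
lemmas E4 = EA[THEN conjunct2, THEN conjunct2, THEN conjunct2, THEN conjunct1]
lemmas E8 = EA[THEN conjunct2, THEN conjunct2, THEN conjunct2, THEN conjunct2, THEN conjunct2, THEN conjunct2, THEN conjunct2]

lemma iso_hom: "iso C f x y \<Longrightarrow> f \<in> Hom C x y" unfolding iso_def by blast
lemma iso_ob1: "iso C f x y \<Longrightarrow> x \<in> Ob C" using iso_hom hom_ob1 by blast
lemma iso_ob2: "iso C f x y \<Longrightarrow> y \<in> Ob C" using iso_hom hom_ob2 by blast
lemma iso_sym: "iso C f x y \<Longrightarrow> \<exists>g. iso C g y x"
  unfolding iso_def by blast
lemma iso_id: "x \<in> Ob C \<Longrightarrow> iso C (idm C x) x x"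
  unfolding iso_def using id_hom comp_id_l by blast

lemma conf_kc: assumes "Conf C i p" shows "\<exists>a b c. kc_pair C a b c i p"
  using E1 assms by blast

lemma kc_homs: "kc_pair C a b c i p \<Longrightarrow> i \<in> Hom C a b \<and> p \<in> Hom C b c"
  unfolding kc_pair_def is_kernel_def by blast

lemma thick_iso: assumes "thick C D" "iso C f x y" "y \<in> D" shows "x \<in> D"
proof -
  have y: "y \<in> Ob C" using iso_ob2 assms by blast
  have "adm_mono C (idm C y)" using E3 y by blast
  then obtain p where cp: "Conf C (idm C y) p" unfolding adm_mono_def by blast
  then obtain a b c where kc: "kc_pair C a b c (idm C y) p" using conf_kc by blast
  have h: "idm C y \<in> Hom C a b" "p \<in> Hom C b c" using kc_homs kc by auto
  have ab: "a = y" "b = y" using hom_uniq1 hom_uniq2 h(1) id_hom y by blast+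
  have c: "c \<in> Ob C" using hom_ob2 h(2) by blast
  have cf: "conflation C y y c (idm C y) p" unfolding conflation_def using cp h ab by simp
  have fh: "f \<in> Hom C x y" using iso_hom assms by blast
  have e1: "cmp C (idm C y) f = cmp C (idm C y) f" by simp
  have e2: "cmp C (idm C c) p = cmp C p (idm C y)" using comp_id_l comp_id_r h ab by metis
  have "Conf C f p"
    using E2[rule_format, of y y c "idm C y" p f x y p c f "idm C y" "idm C c"]
      cf fh h ab assms(2) iso_id y c e2 by blast
  hence "conflation C x y c f p" unfolding conflation_def using fh h ab by simp
  thus ?thesis using assms unfolding thick_def by blast
qed

lemma thick_iso': assumes "thick C D" "iso C f x y" "x \<in> D" shows "y \<in> D"
  using thick_iso iso_sym assms by blast

lemma zero_ob: "is_zero_obj C z \<Longrightarrow> z \<in> Ob C" unfolding is_zero_obj_def by blast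

lemma zero_iso: assumes "is_zero_obj C z" "is_zero_obj C z'" shows "\<exists>f. iso C f z' z"
proof -
  have o: "z \<in> Ob C" "z' \<in> Ob C" using zero_ob assms by auto
  obtain f where f: "f \<in> Hom C z' z" using assms(1) o unfolding is_zero_obj_def by blast
  obtain g where g: "g \<in> Hom C z z'" using assms(1) o unfolding is_zero_obj_def by blast
  have u1: "\<And>h k. h \<in> Hom C z' z' \<Longrightarrow> k \<in> Hom C z' z' \<Longrightarrow> h = k"
    using assms(2) o unfolding is_zero_obj_def by metis
  have u2: "\<And>h k. h \<in> Hom C z z \<Longrightarrow> k \<in> Hom C z z \<Longrightarrow> h = k"
    using assms(1) o unfolding is_zero_obj_def by metis
  have "cmp C g f = idm C z'" using u1 comp_hom f g id_hom o by blast
  moreover have "cmp C f g = idm C z" using u2 comp_hom f g id_hom o by blast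
  ultimately show ?thesis unfolding iso_def using f g by blast
qed

lemma zero_exists: "\<exists>z. is_zero_obj C z"
  using addc unfolding additive_def by blast

definition TAs :: "'o set \<Rightarrow> bool" where
  "TAs D \<longleftrightarrow> thick C D \<and> additive_subcat C D"

lemma TA_zero: assumes "TAs D" "is_zero_obj C z" shows "z \<in> D"
proof -
  obtain z1 where "z1 \<in> D" "is_zero_obj C z1" using assms unfolding TAs_def additive_subcat_def by blast
  then show ?thesis using zero_iso assms thick_iso unfolding TAs_def by metis
qed

lemma id_zero_obj: assumes "t \<in> Ob C" "idm C t = mzero C t t" shows "is_zero_obj C t"
  unfolding is_zero_obj_def
proof (intro conjI ballI assms(1))
  fix x assume x: "x \<in> Ob C"
  have a: "f = mzero C t x" if "f \<in> Hom C t x" for f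
    using comp_id_r[OF that] assms comp_zero_r[OF that] by metis
  have b: "f = mzero C x t" if "f \<in> Hom C x t" for f
    using comp_id_l[OF that] assms comp_zero_l[OF that] by metis
  show "\<exists>!f. f \<in> Hom C t x" using a zero_hom x assms(1) by blast
  show "\<exists>!f. f \<in> Hom C x t" using b zero_hom x assms(1) by blast
qed

lemma zero_id: assumes "is_zero_obj C z" shows "idm C z = mzero C z z"
proof -
  have o: "z \<in> Ob C" using zero_ob assms by auto
  have u: "\<And>h k. h \<in> Hom C z z \<Longrightarrow> k \<in> Hom C z z \<Longrightarrow> h = k"
    using assms o unfolding is_zero_obj_def by metis
  show ?thesis using u id_hom zero_hom o by blast
qed

lemma tmo_zero_l: assumes "g \<in> Hom C y y'" "x \<in> Ob C" "x' \<in> Ob C"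
  shows "tmo C (mzero C x x') g = mzero C (tob C x y) (tob C x' y')"
proof -
  have z: "mzero C x x' \<in> Hom C x x'" using zero_hom assms by blast
  have "tmo C (mzero C x x') g = tmo C (madd C (mzero C x x') (mzero C x x')) g"
    using add_zero z by simp
  also have "\<dots> = madd C (tmo C (mzero C x x') g) (tmo C (mzero C x x') g)"
    using tmo_add_l z assms by blast
  finally show ?thesis using idem_zero tmo_hom z assms by metis
qed

lemma tmo_zero_r: assumes "f \<in> Hom C x x'" "y \<in> Ob C" "y' \<in> Ob C"
  shows "tmo C f (mzero C y y') = mzero C (tob C x y) (tob C x' y')"
proof -
  have z: "mzero C y y' \<in> Hom C y y'" using zero_hom assms by blast
  have "tmo C f (mzero C y y') = tmo C f (madd C (mzero C y y') (mzero C y y'))"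
    using add_zero z by simp
  also have "\<dots> = madd C (tmo C f (mzero C y y')) (tmo C f (mzero C y y'))"
    using tmo_add_r z assms by blast
  finally show ?thesis using idem_zero tmo_hom z assms by metis
qed

lemma zero_tob_l: assumes "is_zero_obj C z" "y \<in> Ob C" shows "is_zero_obj C (tob C z y)"
proof -
  have o: "z \<in> Ob C" using zero_ob assms by auto
  have "idm C (tob C z y) = tmo C (idm C z) (idm C y)" using tmo_id o assms by simp
  also have "\<dots> = tmo C (mzero C z z) (idm C y)" using zero_id assms by simp
  also have "\<dots> = mzero C (tob C z y) (tob C z y)" using tmo_zero_l id_hom o assms by blast
  finally show ?thesis using id_zero_obj tob_ob o assms by blast
qed

lemma zero_tob_r: assumes "is_zero_obj C z" "y \<in> Ob C" shows "is_zero_obj C (tob C y z)"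
proof -
  have o: "z \<in> Ob C" using zero_ob assms by auto
  have "idm C (tob C y z) = tmo C (idm C y) (idm C z)" using tmo_id o assms by simp
  also have "\<dots> = tmo C (idm C y) (mzero C z z)" using zero_id assms by simp
  also have "\<dots> = mzero C (tob C y z) (tob C y z)" using tmo_zero_r id_hom o assms by blast
  finally show ?thesis using id_zero_obj tob_ob o assms by blast
qed

lemma tmo_iso: assumes "iso C f x x'" "iso C g y y'" shows "iso C (tmo C f g) (tob C x y) (tob C x' y')"
proof -
  obtain f' where f: "f \<in> Hom C x x'" "f' \<in> Hom C x' x" "cmp C f' f = idm C x" "cmp C f f' = idm C x'"
    using assms(1) unfolding iso_def by blast
  obtain g' where g: "g \<in> Hom C y y'" "g' \<in> Hom C y' y" "cmp C g' g = idm C y" "cmp C g g' = idm C y'"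
    using assms(2) unfolding iso_def by blast
  have o: "x \<in> Ob C" "x' \<in> Ob C" "y \<in> Ob C" "y' \<in> Ob C" using f g hom_ob1 hom_ob2 by blast+
  have "cmp C (tmo C f' g') (tmo C f g) = idm C (tob C x y)"
    using tmo_comp[OF f(1,2) g(1,2)] f g tmo_id o by simp
  moreover have "cmp C (tmo C f g) (tmo C f' g') = idm C (tob C x' y')"
    using tmo_comp[OF f(2,1) g(2,1)] f g tmo_id o by simp
  ultimately show ?thesis unfolding iso_def using tmo_hom f g by blast
qed


lemma ex1_eq: "\<exists>!x. P x \<Longrightarrow> P a \<Longrightarrow> P b \<Longrightarrow> a = b" by blast

lemma coprod_univ: assumes "is_coprod C a b w i j" "t \<in> Ob C" "f \<in> Hom C a t" "g \<in> Hom C b t"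
  shows "\<exists>!h. h \<in> Hom C w t \<and> cmp C h i = f \<and> cmp C h j = g"
  using assms unfolding is_coprod_def by blast

lemma coprod_proj: assumes cp: "is_coprod C a b w i j"
  shows "\<exists>p q. p \<in> Hom C w a \<and> q \<in> Hom C w b \<and> cmp C p i = idm C a \<and> cmp C p j = mzero C b a \<and>
     cmp C q i = mzero C a b \<and> cmp C q j = idm C b \<and> madd C (cmp C i p) (cmp C j q) = idm C w"
proof -
  have ij: "i \<in> Hom C a w" "j \<in> Hom C b w" using cp unfolding is_coprod_def by auto
  have o: "a \<in> Ob C" "b \<in> Ob C" "w \<in> Ob C" using ij hom_ob1 hom_ob2 by blast+
  obtain p where p: "p \<in> Hom C w a" "cmp C p i = idm C a" "cmp C p j = mzero C b a"
    using ex1_implies_ex[OF coprod_univ[OF cp o(1) id_hom[OF o(1)] zero_hom[OF o(2) o(1)]]] by blast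
  obtain q where q: "q \<in> Hom C w b" "cmp C q i = mzero C a b" "cmp C q j = idm C b"
    using ex1_implies_ex[OF coprod_univ[OF cp o(2) zero_hom[OF o(1) o(2)] id_hom[OF o(2)]]] by blast
  have ip: "cmp C i p \<in> Hom C w w" "cmp C j q \<in> Hom C w w" using comp_hom ij p q by blast+
  let ?s = "madd C (cmp C i p) (cmp C j q)"
  have s: "?s \<in> Hom C w w" using add_hom ip by blast
  have "cmp C ?s i = madd C (cmp C (cmp C i p) i) (cmp C (cmp C j q) i)"
    using distr ip ij by blast
  also have "\<dots> = madd C (cmp C i (cmp C p i)) (cmp C j (cmp C q i))"
    using comp_assoc[OF ij(1) p(1) ij(1)] comp_assoc[OF ij(1) q(1) ij(2)] by simp
  also have "\<dots> = madd C i (mzero C a w)"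
    using p(2) q(2) comp_id_r[OF ij(1)] comp_zero_r[OF ij(2) o(1)] by simp
  also have "\<dots> = i" using add_zero ij by blast
  finally have s1: "cmp C ?s i = i" .
  have "cmp C ?s j = madd C (cmp C (cmp C i p) j) (cmp C (cmp C j q) j)"
    using distr ip ij by blast
  also have "\<dots> = madd C (cmp C i (cmp C p j)) (cmp C j (cmp C q j))"
    using comp_assoc[OF ij(2) p(1) ij(1)] comp_assoc[OF ij(2) q(1) ij(2)] by simp
  also have "\<dots> = madd C (mzero C b w) j"
    using p(3) q(3) comp_id_r[OF ij(2)] comp_zero_r[OF ij(1) o(2)] by simp
  also have "\<dots> = j" using add_zero_l ij by blast
  finally have s2: "cmp C ?s j = j" .
  have "?s = idm C w"
    apply (rule ex1_eq[OF coprod_univ[OF cp o(3) ij]])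
    using s s1 s2 id_hom[OF o(3)] comp_id_l[OF ij(1)] comp_id_l[OF ij(2)] by auto
  thus ?thesis using p q by blast
qed

lemma biprod_coprod:
  assumes h: "ja \<in> Hom C a w" "jb \<in> Hom C b w" "qa \<in> Hom C w a" "qb \<in> Hom C w b"
    and e: "cmp C qa ja = idm C a" "cmp C qa jb = mzero C b a" "cmp C qb ja = mzero C a b"
      "cmp C qb jb = idm C b" "madd C (cmp C ja qa) (cmp C jb qb) = idm C w"
  shows "is_coprod C a b w ja jb"
  unfolding is_coprod_def
proof (intro conjI h(1,2) ballI)
  fix t f g assume t: "t \<in> Ob C" and f: "f \<in> Hom C a t" and g: "g \<in> Hom C b t"
  have o: "a \<in> Ob C" "b \<in> Ob C" "w \<in> Ob C" using h hom_ob1 hom_ob2 by blast+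
  let ?h = "madd C (cmp C f qa) (cmp C g qb)"
  have fq: "cmp C f qa \<in> Hom C w t" "cmp C g qb \<in> Hom C w t" using comp_hom h f g by blast+
  have hh: "?h \<in> Hom C w t" using add_hom fq by blast
  have "cmp C ?h ja = madd C (cmp C (cmp C f qa) ja) (cmp C (cmp C g qb) ja)"
    using distr fq h by blast
  also have "\<dots> = madd C (cmp C f (cmp C qa ja)) (cmp C g (cmp C qb ja))"
    using comp_assoc[OF h(1) h(3) f] comp_assoc[OF h(1) h(4) g] by simp
  also have "\<dots> = madd C f (mzero C a t)" using e comp_id_r[OF f] comp_zero_r[OF g o(1)] by simp
  also have "\<dots> = f" using add_zero f by blast
  finally have h1: "cmp C ?h ja = f" .
  have "cmp C ?h jb = madd C (cmp C (cmp C f qa) jb) (cmp C (cmp C g qb) jb)"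
    using distr fq h by blast
  also have "\<dots> = madd C (cmp C f (cmp C qa jb)) (cmp C g (cmp C qb jb))"
    using comp_assoc[OF h(2) h(3) f] comp_assoc[OF h(2) h(4) g] by simp
  also have "\<dots> = madd C (mzero C b t) g" using e comp_id_r[OF g] comp_zero_r[OF f o(2)] by simp
  also have "\<dots> = g" using add_zero_l g by blast
  finally have h2: "cmp C ?h jb = g" .
  have uniq: "k = ?h" if k: "k \<in> Hom C w t" "cmp C k ja = f" "cmp C k jb = g" for k
  proof -
    have jq: "cmp C ja qa \<in> Hom C w w" "cmp C jb qb \<in> Hom C w w" using comp_hom h by blast+
    have "k = cmp C k (idm C w)" using comp_id_r k by metis
    also have "\<dots> = cmp C k (madd C (cmp C ja qa) (cmp C jb qb))" using e by simp
    also have "\<dots> = madd C (cmp C k (cmp C ja qa)) (cmp C k (cmp C jb qb))"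
      using distl jq k by blast
    also have "\<dots> = ?h" using comp_assoc[OF h(3) h(1) k(1)] comp_assoc[OF h(4) h(2) k(1)] k by simp
    finally show ?thesis .
  qed
  show "\<exists>!k. k \<in> Hom C w t \<and> cmp C k ja = f \<and> cmp C k jb = g"
  proof (rule ex1I[where a = ?h])
    show "?h \<in> Hom C w t \<and> cmp C ?h ja = f \<and> cmp C ?h jb = g" using hh h1 h2 by blast
  next
    fix k assume "k \<in> Hom C w t \<and> cmp C k ja = f \<and> cmp C k jb = g"
    then show "k = ?h" using uniq by blast
  qed
qed

lemma coprod_tob_r: assumes cp: "is_coprod C a b w i j" and z: "z \<in> Ob C"
  shows "is_coprod C (tob C a z) (tob C b z) (tob C w z) (tmo C i (idm C z)) (tmo C j (idm C z))"
proof -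
  have ij: "i \<in> Hom C a w" "j \<in> Hom C b w" using cp unfolding is_coprod_def by auto
  have o: "a \<in> Ob C" "b \<in> Ob C" "w \<in> Ob C" using ij hom_ob1 hom_ob2 by blast+
  obtain p q where pq: "p \<in> Hom C w a" "q \<in> Hom C w b" "cmp C p i = idm C a" "cmp C p j = mzero C b a"
     "cmp C q i = mzero C a b" "cmp C q j = idm C b" "madd C (cmp C i p) (cmp C j q) = idm C w"
    using coprod_proj[OF cp] by blast
  have iz: "idm C z \<in> Hom C z z" using id_hom z by blast
  have izz: "cmp C (idm C z) (idm C z) = idm C z" using comp_id_l iz by blast
  have c: "cmp C (tmo C g (idm C z)) (tmo C f (idm C z)) = tmo C (cmp C g f) (idm C z)"
    if "f \<in> Hom C x y" "g \<in> Hom C y y'" for f g x y y'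
    using tmo_comp[OF that iz iz] izz by simp
  show ?thesis
  proof (rule biprod_coprod[where qa = "tmo C p (idm C z)" and qb = "tmo C q (idm C z)"])
    show "tmo C i (idm C z) \<in> Hom C (tob C a z) (tob C w z)" using tmo_hom ij iz by blast
    show "tmo C j (idm C z) \<in> Hom C (tob C b z) (tob C w z)" using tmo_hom ij iz by blast
    show "tmo C p (idm C z) \<in> Hom C (tob C w z) (tob C a z)" using tmo_hom pq iz by blast
    show "tmo C q (idm C z) \<in> Hom C (tob C w z) (tob C b z)" using tmo_hom pq iz by blast
    show "cmp C (tmo C p (idm C z)) (tmo C i (idm C z)) = idm C (tob C a z)"
      using c[OF ij(1) pq(1)] pq(3) tmo_id o z by simp
    show "cmp C (tmo C p (idm C z)) (tmo C j (idm C z)) = mzero C (tob C b z) (tob C a z)"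
      using c[OF ij(2) pq(1)] pq(4) tmo_zero_l[OF iz o(2) o(1)] by simp
    show "cmp C (tmo C q (idm C z)) (tmo C i (idm C z)) = mzero C (tob C a z) (tob C b z)"
      using c[OF ij(1) pq(2)] pq(5) tmo_zero_l[OF iz o(1) o(2)] by simp
    show "cmp C (tmo C q (idm C z)) (tmo C j (idm C z)) = idm C (tob C b z)"
      using c[OF ij(2) pq(2)] pq(6) tmo_id o z by simp
    have ip: "cmp C i p \<in> Hom C w w" "cmp C j q \<in> Hom C w w" using comp_hom ij pq by blast+
    have "madd C (cmp C (tmo C i (idm C z)) (tmo C p (idm C z))) (cmp C (tmo C j (idm C z)) (tmo C q (idm C z)))
       = madd C (tmo C (cmp C i p) (idm C z)) (tmo C (cmp C j q) (idm C z))"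
      using c[OF pq(1) ij(1)] c[OF pq(2) ij(2)] by simp
    also have "\<dots> = tmo C (madd C (cmp C i p) (cmp C j q)) (idm C z)"
      using tmo_add_l[OF ip iz] by simp
    also have "\<dots> = idm C (tob C w z)" using pq(7) tmo_id o z by simp
    finally show "madd C (cmp C (tmo C i (idm C z)) (tmo C p (idm C z))) (cmp C (tmo C j (idm C z)) (tmo C q (idm C z)))
       = idm C (tob C w z)" .
  qed
qed

lemma coprod_tob_l: assumes cp: "is_coprod C a b w i j" and z: "z \<in> Ob C"
  shows "is_coprod C (tob C z a) (tob C z b) (tob C z w) (tmo C (idm C z) i) (tmo C (idm C z) j)"
proof -
  have ij: "i \<in> Hom C a w" "j \<in> Hom C b w" using cp unfolding is_coprod_def by auto
  have o: "a \<in> Ob C" "b \<in> Ob C" "w \<in> Ob C" using ij hom_ob1 hom_ob2 by blast+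
  obtain p q where pq: "p \<in> Hom C w a" "q \<in> Hom C w b" "cmp C p i = idm C a" "cmp C p j = mzero C b a"
     "cmp C q i = mzero C a b" "cmp C q j = idm C b" "madd C (cmp C i p) (cmp C j q) = idm C w"
    using coprod_proj[OF cp] by blast
  have iz: "idm C z \<in> Hom C z z" using id_hom z by blast
  have izz: "cmp C (idm C z) (idm C z) = idm C z" using comp_id_l iz by blast
  have c: "cmp C (tmo C (idm C z) g) (tmo C (idm C z) f) = tmo C (idm C z) (cmp C g f)"
    if "f \<in> Hom C x y" "g \<in> Hom C y y'" for f g x y y'
    using tmo_comp[OF iz iz that] izz by simp
  show ?thesis
  proof (rule biprod_coprod[where qa = "tmo C (idm C z) p" and qb = "tmo C (idm C z) q"])
    show "tmo C (idm C z) i \<in> Hom C (tob C z a) (tob C z w)" using tmo_hom ij iz by blast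
    show "tmo C (idm C z) j \<in> Hom C (tob C z b) (tob C z w)" using tmo_hom ij iz by blast
    show "tmo C (idm C z) p \<in> Hom C (tob C z w) (tob C z a)" using tmo_hom pq iz by blast
    show "tmo C (idm C z) q \<in> Hom C (tob C z w) (tob C z b)" using tmo_hom pq iz by blast
    show "cmp C (tmo C (idm C z) p) (tmo C (idm C z) i) = idm C (tob C z a)"
      using c[OF ij(1) pq(1)] pq(3) tmo_id o z by simp
    show "cmp C (tmo C (idm C z) p) (tmo C (idm C z) j) = mzero C (tob C z b) (tob C z a)"
      using c[OF ij(2) pq(1)] pq(4) tmo_zero_r[OF iz o(2) o(1)] by simp
    show "cmp C (tmo C (idm C z) q) (tmo C (idm C z) i) = mzero C (tob C z a) (tob C z b)"
      using c[OF ij(1) pq(2)] pq(5) tmo_zero_r[OF iz o(1) o(2)] by simp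
    show "cmp C (tmo C (idm C z) q) (tmo C (idm C z) j) = idm C (tob C z b)"
      using c[OF ij(2) pq(2)] pq(6) tmo_id o z by simp
    have ip: "cmp C i p \<in> Hom C w w" "cmp C j q \<in> Hom C w w" using comp_hom ij pq by blast+
    have "madd C (cmp C (tmo C (idm C z) i) (tmo C (idm C z) p)) (cmp C (tmo C (idm C z) j) (tmo C (idm C z) q))
       = madd C (tmo C (idm C z) (cmp C i p)) (tmo C (idm C z) (cmp C j q))"
      using c[OF pq(1) ij(1)] c[OF pq(2) ij(2)] by simp
    also have "\<dots> = tmo C (idm C z) (madd C (cmp C i p) (cmp C j q))"
      using tmo_add_r[OF iz ip] by simp
    also have "\<dots> = idm C (tob C z w)" using pq(7) tmo_id o z by simp
    finally show "madd C (cmp C (tmo C (idm C z) i) (tmo C (idm C z) p)) (cmp C (tmo C (idm C z) j) (tmo C (idm C z) q))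
       = idm C (tob C z w)" .
  qed
qed


lemma conf_ob: assumes "conflation C a b c i p" shows "a \<in> Ob C" "b \<in> Ob C" "c \<in> Ob C"
  using assms hom_ob1 hom_ob2 unfolding conflation_def by blast+

lemma conf_tob_r: assumes "conflation C a b c i p" "z \<in> Ob C"
  shows "conflation C (tob C a z) (tob C b z) (tob C c z) (tmo C i (idm C z)) (tmo C p (idm C z))"
  using tex_r[OF assms] tmo_hom id_hom[OF assms(2)] assms(1) unfolding conflation_def by blast

lemma conf_tob_l: assumes "conflation C a b c i p" "z \<in> Ob C"
  shows "conflation C (tob C z a) (tob C z b) (tob C z c) (tmo C (idm C z) i) (tmo C (idm C z) p)"
  using tex_l[OF assms] tmo_hom id_hom[OF assms(2)] assms(1) unfolding conflation_def by blast

lemma thick_conf: "thick C D \<Longrightarrow> conflation C a b c i p \<Longrightarrow> (b \<in> D \<longleftrightarrow> a \<in> D \<and> c \<in> D)"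
  unfolding thick_def by blast

lemma TA_tob_r: assumes D: "TAs D" and z: "z \<in> Ob C" shows "TAs {u \<in> Ob C. tob C u z \<in> D}"
  unfolding TAs_def thick_def additive_subcat_def
proof (intro conjI allI impI ballI)
  show "{u \<in> Ob C. tob C u z \<in> D} \<subseteq> Ob C" by blast
  fix a b c i p assume cf: "conflation C a b c i p"
  have "tob C b z \<in> D \<longleftrightarrow> tob C a z \<in> D \<and> tob C c z \<in> D"
    using thick_conf[OF _ conf_tob_r[OF cf z]] D unfolding TAs_def by blast
  then show "b \<in> {u \<in> Ob C. tob C u z \<in> D} \<longleftrightarrow> a \<in> {u \<in> Ob C. tob C u z \<in> D} \<and> c \<in> {u \<in> Ob C. tob C u z \<in> D}"
    using conf_ob[OF cf] by blast
next
  obtain z0 where z0: "is_zero_obj C z0" using zero_exists by blast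
  have "tob C z0 z \<in> D" using TA_zero[OF D zero_tob_l[OF z0 z]] .
  then show "\<exists>x\<in>{u \<in> Ob C. tob C u z \<in> D}. is_zero_obj C x" using z0 zero_ob by blast
next
  fix a b w i j assume h: "a \<in> {u \<in> Ob C. tob C u z \<in> D} \<and> b \<in> {u \<in> Ob C. tob C u z \<in> D} \<and> is_coprod C a b w i j"
  have w: "w \<in> Ob C" using h hom_ob2 unfolding is_coprod_def by blast
  have "tob C w z \<in> D" using coprod_tob_r[OF _ z, of a b w i j] h D
    unfolding TAs_def additive_subcat_def by blast
  then show "w \<in> {u \<in> Ob C. tob C u z \<in> D}" using w by blast
next
  show "{u \<in> Ob C. tob C u z \<in> D} \<subseteq> Ob C" by blast
qed

lemma TA_tob_l: assumes D: "TAs D" and z: "z \<in> Ob C" shows "TAs {u \<in> Ob C. tob C z u \<in> D}"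
  unfolding TAs_def thick_def additive_subcat_def
proof (intro conjI allI impI ballI)
  show "{u \<in> Ob C. tob C z u \<in> D} \<subseteq> Ob C" by blast
  fix a b c i p assume cf: "conflation C a b c i p"
  have "tob C z b \<in> D \<longleftrightarrow> tob C z a \<in> D \<and> tob C z c \<in> D"
    using thick_conf[OF _ conf_tob_l[OF cf z]] D unfolding TAs_def by blast
  then show "b \<in> {u \<in> Ob C. tob C z u \<in> D} \<longleftrightarrow> a \<in> {u \<in> Ob C. tob C z u \<in> D} \<and> c \<in> {u \<in> Ob C. tob C z u \<in> D}"
    using conf_ob[OF cf] by blast
next
  obtain z0 where z0: "is_zero_obj C z0" using zero_exists by blast
  have "tob C z z0 \<in> D" using TA_zero[OF D zero_tob_r[OF z0 z]] .
  then show "\<exists>x\<in>{u \<in> Ob C. tob C z u \<in> D}. is_zero_obj C x" using z0 zero_ob by blast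
next
  fix a b w i j assume h: "a \<in> {u \<in> Ob C. tob C z u \<in> D} \<and> b \<in> {u \<in> Ob C. tob C z u \<in> D} \<and> is_coprod C a b w i j"
  have w: "w \<in> Ob C" using h hom_ob2 unfolding is_coprod_def by blast
  have "tob C z w \<in> D" using coprod_tob_l[OF _ z, of a b w i j] h D
    unfolding TAs_def additive_subcat_def by blast
  then show "w \<in> {u \<in> Ob C. tob C z u \<in> D}" using w by blast
next
  show "{u \<in> Ob C. tob C z u \<in> D} \<subseteq> Ob C" by blast
qed

lemma TA_Inter: assumes F: "\<And>k. k \<in> K \<Longrightarrow> TAs (F k)" shows "TAs {u \<in> Ob C. \<forall>k\<in>K. u \<in> F k}"
  unfolding TAs_def thick_def additive_subcat_def
proof (intro conjI allI impI ballI)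
  show "{u \<in> Ob C. \<forall>k\<in>K. u \<in> F k} \<subseteq> Ob C" by blast
  fix a b c i p assume cf: "conflation C a b c i p"
  have "\<And>k. k \<in> K \<Longrightarrow> (b \<in> F k \<longleftrightarrow> a \<in> F k \<and> c \<in> F k)"
    using thick_conf[OF _ cf] F unfolding TAs_def by blast
  then show "b \<in> {u \<in> Ob C. \<forall>k\<in>K. u \<in> F k} \<longleftrightarrow> a \<in> {u \<in> Ob C. \<forall>k\<in>K. u \<in> F k} \<and> c \<in> {u \<in> Ob C. \<forall>k\<in>K. u \<in> F k}"
    using conf_ob[OF cf] by blast
next
  obtain z0 where z0: "is_zero_obj C z0" using zero_exists by blast
  then show "\<exists>x\<in>{u \<in> Ob C. \<forall>k\<in>K. u \<in> F k}. is_zero_obj C x" using TA_zero F zero_ob by blast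
next
  fix a b w i j assume h: "a \<in> {u \<in> Ob C. \<forall>k\<in>K. u \<in> F k} \<and> b \<in> {u \<in> Ob C. \<forall>k\<in>K. u \<in> F k} \<and> is_coprod C a b w i j"
  have w: "w \<in> Ob C" using h hom_ob2 unfolding is_coprod_def by blast
  have "\<And>k. k \<in> K \<Longrightarrow> w \<in> F k" using h F unfolding TAs_def additive_subcat_def by blast
  then show "w \<in> {u \<in> Ob C. \<forall>k\<in>K. u \<in> F k}" using w by blast
next
  show "{u \<in> Ob C. \<forall>k\<in>K. u \<in> F k} \<subseteq> Ob C" by blast
qed

lemma TTI_iff: "thick_tensor_ideal C D \<longleftrightarrow> TAs D \<and> (\<forall>x\<in>Ob C. \<forall>y\<in>Ob C. x \<in> D \<or> y \<in> D \<longrightarrow> tob C x y \<in> D)"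
  unfolding thick_tensor_ideal_def TAs_def tensor_ideal_def by blast

lemma TTI_sub: "thick_tensor_ideal C D \<Longrightarrow> D \<subseteq> Ob C"
  unfolding TTI_iff TAs_def thick_def by blast

lemma TTI_l: "thick_tensor_ideal C D \<Longrightarrow> x \<in> Ob C \<Longrightarrow> y \<in> D \<Longrightarrow> tob C x y \<in> D"
  using TTI_iff TTI_sub by blast
lemma TTI_r: "thick_tensor_ideal C D \<Longrightarrow> x \<in> D \<Longrightarrow> y \<in> Ob C \<Longrightarrow> tob C x y \<in> D"
  using TTI_iff TTI_sub by blast
lemma TTI_thick: "thick_tensor_ideal C D \<Longrightarrow> thick C D"
  unfolding TTI_iff TAs_def by blast
lemma TTI_iso: "thick_tensor_ideal C D \<Longrightarrow> iso C f x y \<Longrightarrow> y \<in> D \<Longrightarrow> x \<in> D"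
  using TTI_thick thick_iso by blast
lemma TTI_iso': "thick_tensor_ideal C D \<Longrightarrow> iso C f x y \<Longrightarrow> x \<in> D \<Longrightarrow> y \<in> D"
  using TTI_thick thick_iso' by blast
lemma TTI_zero: "thick_tensor_ideal C D \<Longrightarrow> is_zero_obj C z \<Longrightarrow> z \<in> D"
  using TA_zero TTI_iff by blast

lemma Ob_TTI: "thick_tensor_ideal C (Ob C)"
  unfolding TTI_iff TAs_def thick_def additive_subcat_def
proof (intro conjI allI impI ballI subset_refl)
  fix a b c i p assume "conflation C a b c i p"
  then show "(b \<in> Ob C) = (a \<in> Ob C \<and> c \<in> Ob C)" using conf_ob by blast
next
  show "\<exists>x\<in>Ob C. is_zero_obj C x" using zero_exists zero_ob by blast
next
  fix a b z i j assume "a \<in> Ob C \<and> b \<in> Ob C \<and> is_coprod C a b z i j"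
  then show "z \<in> Ob C" using hom_ob2 unfolding is_coprod_def by blast
next
  fix x y assume "x \<in> Ob C" "y \<in> Ob C"
  then show "tob C x y \<in> Ob C" using tob_ob by blast
qed

lemma Inter_TTI: assumes "\<F> \<noteq> {}" "\<And>D. D \<in> \<F> \<Longrightarrow> thick_tensor_ideal C D"
  shows "thick_tensor_ideal C (\<Inter>\<F>)"
proof -
  have eq: "\<Inter>\<F> = {u \<in> Ob C. \<forall>D\<in>\<F>. u \<in> id D}" using assms TTI_sub by auto
  have "TAs (\<Inter>\<F>)" unfolding eq by (rule TA_Inter) (use assms TTI_iff in auto)
  moreover have "\<forall>x\<in>Ob C. \<forall>y\<in>Ob C. x \<in> \<Inter>\<F> \<or> y \<in> \<Inter>\<F> \<longrightarrow> tob C x y \<in> \<Inter>\<F>"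
    using assms TTI_iff by blast
  ultimately show ?thesis unfolding TTI_iff by blast
qed

lemma gen_TTI: assumes "S \<subseteq> Ob C" shows "thick_tensor_ideal C (gen C S)"
  unfolding gen_def by (rule Inter_TTI) (use assms Ob_TTI in auto)

lemma gen_sub: "S \<subseteq> gen C S" unfolding gen_def by blast

lemma gen_least: "thick_tensor_ideal C E \<Longrightarrow> S \<subseteq> E \<Longrightarrow> gen C S \<subseteq> E"
  unfolding gen_def by blast

lemma gen_le_iff: "thick_tensor_ideal C E \<Longrightarrow> gen C S \<subseteq> E \<longleftrightarrow> S \<subseteq> E"
  using gen_least gen_sub by blast

lemma gen_id: "thick_tensor_ideal C D \<Longrightarrow> gen C D = D"
  using gen_least gen_sub by blast

lemma gen_mono: "S \<subseteq> T \<Longrightarrow> gen C S \<subseteq> gen C T"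
  unfolding gen_def by blast

lemma TTI_eq: assumes "thick_tensor_ideal C X" "thick_tensor_ideal C Y"
  "\<And>E. thick_tensor_ideal C E \<Longrightarrow> X \<subseteq> E \<longleftrightarrow> Y \<subseteq> E" shows "X = Y"
  using assms by blast


lemma zero_uniq_to: "is_zero_obj C z \<Longrightarrow> f \<in> Hom C z x \<Longrightarrow> g \<in> Hom C z x \<Longrightarrow> f = g"
proof -
  assume z: "is_zero_obj C z" and f: "f \<in> Hom C z x" and g: "g \<in> Hom C z x"
  have "x \<in> Ob C" using hom_ob2 f by blast
  then have "\<exists>!f. f \<in> Hom C z x" using z unfolding is_zero_obj_def by blast
  then show "f = g" using f g by blast
qed

lemma coprod_zero_iso: assumes z: "is_zero_obj C z" and cp: "is_coprod C z s w i j" shows "iso C j s w"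
proof -
  have ij: "i \<in> Hom C z w" "j \<in> Hom C s w" using cp unfolding is_coprod_def by auto
  have o: "z \<in> Ob C" "s \<in> Ob C" "w \<in> Ob C" using ij hom_ob1 hom_ob2 by blast+
  obtain h where h: "h \<in> Hom C w s" "cmp C h i = mzero C z s" "cmp C h j = idm C s"
    using ex1_implies_ex[OF coprod_univ[OF cp o(2) zero_hom[OF o(1) o(2)] id_hom[OF o(2)]]] by blast
  have jh: "cmp C j h \<in> Hom C w w" using comp_hom h ij by blast
  have e1: "cmp C (cmp C j h) i = i"
  proof -
    have "cmp C (cmp C j h) i = cmp C j (cmp C h i)" using comp_assoc[OF ij(1) h(1) ij(2)] by simp
    also have "\<dots> = mzero C z w" using h(2) comp_zero_r[OF ij(2) o(1)] by simp
    finally show ?thesis using zero_uniq_to[OF z ij(1) zero_hom[OF o(1) o(3)]] by simp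
  qed
  have e2: "cmp C (cmp C j h) j = j"
    using comp_assoc[OF ij(2) h(1) ij(2)] h(3) comp_id_r[OF ij(2)] by simp
  have "cmp C j h = idm C w"
    apply (rule ex1_eq[OF coprod_univ[OF cp o(3) ij]])
    using jh e1 e2 id_hom[OF o(3)] comp_id_l[OF ij(1)] comp_id_l[OF ij(2)] by auto
  then show ?thesis unfolding iso_def using ij h by blast
qed

lemma fincop_sub: "fincop C S \<subseteq> Ob C"
proof
  fix x assume "x \<in> fincop C S" then show "x \<in> Ob C"
  proof (induction rule: fincop.induct)
    case (zero z) then show ?case using zero_ob by blast
  next
    case (step a b z i j) then have "i \<in> Hom C a z" unfolding is_coprod_def by blast
    then show ?case using hom_ob2 by blast
  qed
qed

lemma fincop_le: assumes E: "TAs E" and S: "S \<subseteq> E" shows "fincop C S \<subseteq> E"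
proof
  fix x assume "x \<in> fincop C S" then show "x \<in> E"
  proof (induction rule: fincop.induct)
    case (zero z) then show ?case using TA_zero E by blast
  next
    case (step a b z i j)
    have "\<forall>a b z i j. a \<in> E \<and> b \<in> E \<and> is_coprod C a b z i j \<longrightarrow> z \<in> E"
      using E unfolding TAs_def additive_subcat_def by blast
    then show ?case using step S by blast
  qed
qed

lemma fincop_iso: assumes "s \<in> S" "s \<in> Ob C" shows "\<exists>w\<in>fincop C S. \<exists>f. iso C f s w"
proof -
  obtain z0 where z0: "is_zero_obj C z0" using zero_exists by blast
  have ac: "\<forall>a\<in>Ob C. \<forall>b\<in>Ob C. \<exists>z i j. is_coprod C a b z i j"
    using addc unfolding additive_def by (elim conjE)
  obtain w i j where cp: "is_coprod C z0 s w i j"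
    using ac[rule_format, OF zero_ob[OF z0] assms(2)] by blast
  have "w \<in> fincop C S" using fincop.step[OF fincop.zero[OF z0] assms(1) cp] .
  then show ?thesis using coprod_zero_iso[OF z0 cp] by blast
qed

lemma tprod_TTI: "thick_tensor_ideal C (tprod C D1 D2)"
  unfolding tprod_def tprod_class_def using gen_TTI fincop_sub by blast

lemma tprod_le_iff: assumes E: "thick_tensor_ideal C E" and D: "D1 \<subseteq> Ob C" "D2 \<subseteq> Ob C"
  shows "tprod C D1 D2 \<subseteq> E \<longleftrightarrow> (\<forall>x\<in>D1. \<forall>y\<in>D2. tob C x y \<in> E)"
proof -
  let ?S = "{tob C x y | x y. x \<in> D1 \<and> y \<in> D2}"
  have "tprod C D1 D2 \<subseteq> E \<longleftrightarrow> fincop C ?S \<subseteq> E"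
    unfolding tprod_def tprod_class_def using gen_le_iff[OF E] by blast
  also have "\<dots> \<longleftrightarrow> ?S \<subseteq> E"
  proof
    assume a: "fincop C ?S \<subseteq> E"
    show "?S \<subseteq> E"
    proof
      fix s assume s: "s \<in> ?S"
      then have "s \<in> Ob C" using D tob_ob by blast
      then obtain w f where wf: "w \<in> fincop C ?S" "iso C f s w" using fincop_iso[OF s] by blast
      then have "w \<in> E" using a by blast
      then show "s \<in> E" using TTI_iso[OF E wf(2)] by blast
    qed
  next
    assume "?S \<subseteq> E" moreover have "TAs E" using E TTI_iff by blast
    ultimately show "fincop C ?S \<subseteq> E" using fincop_le by blast
  qed
  also have "\<dots> \<longleftrightarrow> (\<forall>x\<in>D1. \<forall>y\<in>D2. tob C x y \<in> E)" by blast
  finally show ?thesis .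
qed


lemma split_obj: assumes x1: "x1 \<in> Ob C" and x2: "x2 \<in> Ob C"
  shows "\<exists>w\<in>Ob C. \<forall>D. thick C D \<longrightarrow> (w \<in> D \<longleftrightarrow> x1 \<in> D \<and> x2 \<in> D)"
proof -
  have "adm_mono C (idm C x1)" using E3 x1 by blast
  then obtain p where cp: "Conf C (idm C x1) p" unfolding adm_mono_def by blast
  then obtain a b c where kc: "kc_pair C a b c (idm C x1) p" using conf_kc by blast
  have h: "idm C x1 \<in> Hom C a b" "p \<in> Hom C b c" using kc_homs kc by auto
  have ab: "a = x1" "b = x1" using hom_uniq1 hom_uniq2 h(1) id_hom x1 by blast+
  have c: "c \<in> Ob C" using hom_ob2 h(2) by blast
  have ph: "p \<in> Hom C x1 c" using h ab by simp
  have "cmp C p (idm C x1) = mzero C x1 c" using kc ab unfolding kc_pair_def is_cokernel_def by blast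
  then have p0: "p = mzero C x1 c" using comp_id_r[OF ph] by simp
  have ae: "adm_epi C p" using cp unfolding adm_epi_def by blast
  have fh: "mzero C x2 c \<in> Hom C x2 c" using zero_hom x2 c by blast
  obtain B p' f' where pb: "is_pullback C x1 c B x2 p (mzero C x2 c) p' f'" and ae': "adm_epi C p'"
    using E8 ph ae fh by blast
  have pbh: "p' \<in> Hom C B x2" "f' \<in> Hom C B x1" "cmp C p f' = cmp C (mzero C x2 c) p'"
    using pb unfolding is_pullback_def by blast+
  have PU: "\<And>w g g'. w \<in> Ob C \<Longrightarrow> g \<in> Hom C w x1 \<Longrightarrow> g' \<in> Hom C w x2 \<Longrightarrow>
      cmp C p g = cmp C (mzero C x2 c) g' \<Longrightarrow>
      (\<exists>!u. u \<in> Hom C w B \<and> cmp C f' u = g \<and> cmp C p' u = g')"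
    using pb unfolding is_pullback_def by blast
  obtain i' where ci: "Conf C i' p'" using ae' unfolding adm_epi_def by blast
  then obtain a' b'' c'' where kc': "kc_pair C a' b'' c'' i' p'" using conf_kc by blast
  have h': "i' \<in> Hom C a' b''" "p' \<in> Hom C b'' c''" using kc_homs kc' by auto
  have bc: "b'' = B" "c'' = x2" using hom_uniq1 hom_uniq2 h'(2) pbh(1) by blast+
  have ih: "i' \<in> Hom C a' B" using h' bc by simp
  have a'o: "a' \<in> Ob C" using hom_ob1 ih by blast
  have Bo: "B \<in> Ob C" using hom_ob2 ih by blast
  have ker: "is_kernel C p' B x2 i' a'" using kc' bc unfolding kc_pair_def by simp
  have pi0: "cmp C p' i' = mzero C a' x2" using ker unfolding is_kernel_def by blast
  have KU: "\<And>w h. w \<in> Ob C \<Longrightarrow> h \<in> Hom C w B \<Longrightarrow> cmp C p' h = mzero C w x2 \<Longrightarrow>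
      (\<exists>!u. u \<in> Hom C w a' \<and> cmp C i' u = h)"
    using ker unfolding is_kernel_def by blast
  have conf: "conflation C a' B x2 i' p'" unfolding conflation_def using ci ih pbh by blast
  have c1: "cmp C p (idm C x1) = cmp C (mzero C x2 c) (mzero C x1 x2)"
    using comp_id_r[OF ph] p0 comp_zero_l[OF zero_hom[OF x1 x2] c] by simp
  obtain u where u: "u \<in> Hom C x1 B" "cmp C f' u = idm C x1" "cmp C p' u = mzero C x1 x2"
    using ex1_implies_ex[OF PU[OF x1 id_hom[OF x1] zero_hom[OF x1 x2] c1]] by blast
  obtain v where v: "v \<in> Hom C x1 a'" "cmp C i' v = u"
    using ex1_implies_ex[OF KU[OF x1 u(1) u(3)]] by blast
  have fi: "cmp C f' i' \<in> Hom C a' x1" using comp_hom ih pbh(2) by blast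
  have e1: "cmp C (cmp C f' i') v = idm C x1"
    using comp_assoc[OF v(1) ih pbh(2)] v(2) u(2) by simp
  have c2: "cmp C p (cmp C f' i') = cmp C (mzero C x2 c) (mzero C a' x2)"
    using comp_assoc[OF ih pbh(2) ph] pbh(3) comp_assoc[OF ih pbh(1) fh] pi0 by simp
  have uf: "cmp C u (cmp C f' i') \<in> Hom C a' B" using comp_hom fi u(1) by blast
  have e2a: "cmp C u (cmp C f' i') = i'"
  proof (rule ex1_eq[OF PU[OF a'o fi zero_hom[OF a'o x2] c2]])
    show "cmp C u (cmp C f' i') \<in> Hom C a' B \<and> cmp C f' (cmp C u (cmp C f' i')) = cmp C f' i' \<and>
      cmp C p' (cmp C u (cmp C f' i')) = mzero C a' x2"
      using uf comp_assoc[OF fi u(1) pbh(2)] u(2) comp_id_l[OF fi] comp_assoc[OF fi u(1) pbh(1)] u(3)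
        comp_zero_l[OF fi x2] by simp
    show "i' \<in> Hom C a' B \<and> cmp C f' i' = cmp C f' i' \<and> cmp C p' i' = mzero C a' x2"
      using ih pi0 by simp
  qed
  have vf: "cmp C v (cmp C f' i') \<in> Hom C a' a'" using comp_hom fi v(1) by blast
  have e2: "cmp C v (cmp C f' i') = idm C a'"
  proof (rule ex1_eq[OF KU[OF a'o ih pi0]])
    show "cmp C v (cmp C f' i') \<in> Hom C a' a' \<and> cmp C i' (cmp C v (cmp C f' i')) = i'"
      using vf comp_assoc[OF fi v(1) ih] v(2) e2a by simp
    show "idm C a' \<in> Hom C a' a' \<and> cmp C i' (idm C a') = i'"
      using id_hom[OF a'o] comp_id_r[OF ih] by simp
  qed
  have iso: "iso C (cmp C f' i') a' x1" unfolding iso_def using fi v e1 e2 by blast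
  show ?thesis
  proof (intro bexI[of _ B] allI impI Bo)
    fix D assume D: "thick C D"
    have "B \<in> D \<longleftrightarrow> a' \<in> D \<and> x2 \<in> D" using thick_conf[OF D conf] .
    moreover have "a' \<in> D \<longleftrightarrow> x1 \<in> D" using thick_iso[OF D iso] thick_iso'[OF D iso] by blast
    ultimately show "B \<in> D \<longleftrightarrow> x1 \<in> D \<and> x2 \<in> D" by blast
  qed
qed


lemma L_mem: "D \<in> Lthick C \<longleftrightarrow> thick_tensor_ideal C D" unfolding Lthick_def by simp

lemma Union_sub: "A \<subseteq> Lthick C \<Longrightarrow> \<Union>A \<subseteq> Ob C"
  using TTI_sub L_mem by blast

lemma sup_L: assumes A: "A \<subseteq> Lthick C" shows "is_sup (Lthick C) (\<subseteq>) A (gen C (\<Union>A))"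
  unfolding is_sup_def
proof (intro conjI ballI impI)
  have "thick_tensor_ideal C (gen C (\<Union>A))" using gen_TTI[OF Union_sub[OF A]] .
  then show "gen C (\<Union>A) \<in> Lthick C" unfolding L_mem .
  fix a assume "a \<in> A" then show "a \<subseteq> gen C (\<Union>A)" using gen_sub by blast
next
  fix b assume b: "b \<in> Lthick C" "\<forall>a\<in>A. a \<subseteq> b"
  have "\<Union>A \<subseteq> b" using b(2) by blast
  moreover have "thick_tensor_ideal C b" using b(1) unfolding L_mem .
  ultimately show "gen C (\<Union>A) \<subseteq> b" using gen_least by blast
qed

lemma lsup_L: assumes A: "A \<subseteq> Lthick C" shows "lsup (Lthick C) (\<subseteq>) A = gen C (\<Union>A)"
  unfolding lsup_def
proof (rule the_equality)
  show "is_sup (Lthick C) (\<subseteq>) A (gen C (\<Union>A))" using sup_L A .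
  fix s assume s: "is_sup (Lthick C) (\<subseteq>) A s"
  have g: "is_sup (Lthick C) (\<subseteq>) A (gen C (\<Union>A))" using sup_L A .
  have s1: "s \<in> Lthick C" "\<forall>a\<in>A. a \<subseteq> s" "\<forall>b\<in>Lthick C. (\<forall>a\<in>A. a \<subseteq> b) \<longrightarrow> s \<subseteq> b"
    using s unfolding is_sup_def by auto
  have g1: "gen C (\<Union>A) \<in> Lthick C" "\<forall>a\<in>A. a \<subseteq> gen C (\<Union>A)"
     "\<forall>b\<in>Lthick C. (\<forall>a\<in>A. a \<subseteq> b) \<longrightarrow> gen C (\<Union>A) \<subseteq> b"
    using g unfolding is_sup_def by auto
  have "s \<subseteq> gen C (\<Union>A)" using s1(3) g1(1,2) by blast
  moreover have "gen C (\<Union>A) \<subseteq> s" using g1(3) s1(1,2) by blast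
  ultimately show "s = gen C (\<Union>A)" by blast
qed

lemma principal_compact: assumes x: "x \<in> Ob C" shows "compact_el (Lthick C) (\<subseteq>) (gen C {x})"
  unfolding compact_el_def
proof (intro conjI allI impI)
  show "gen C {x} \<in> Lthick C" using gen_TTI x L_mem by blast
  fix A assume asm: "A \<subseteq> Lthick C \<and> gen C {x} \<subseteq> lsup (Lthick C) (\<subseteq>) A"
  then have A: "A \<subseteq> Lthick C" by blast
  have "x \<in> gen C {x}" using gen_sub by blast
  then have xA: "x \<in> gen C (\<Union>A)" using asm lsup_L[OF A] by blast
  define U where "U = {u \<in> Ob C. \<exists>A'. A' \<subseteq> A \<and> finite A' \<and> u \<in> gen C (\<Union>A')}"
  have T: "thick_tensor_ideal C (gen C (\<Union>A'))" if "A' \<subseteq> A" for A'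
  proof -
    have "A' \<subseteq> Lthick C" using that A by blast
    then show ?thesis using gen_TTI Union_sub by blast
  qed
  have mono1: "gen C (\<Union>A1) \<subseteq> gen C (\<Union>(A1 \<union> A2))" for A1 A2
    by (rule gen_mono) blast
  have mono2: "gen C (\<Union>A2) \<subseteq> gen C (\<Union>(A1 \<union> A2))" for A1 A2
    by (rule gen_mono) blast
  have UiD: "\<exists>A'. A' \<subseteq> A \<and> finite A' \<and> u \<in> gen C (\<Union>A')" if "u \<in> U" for u
    using that unfolding U_def by blast
  have UiO: "u \<in> Ob C" if "u \<in> U" for u
    using that unfolding U_def by blast
  have UiI: "u \<in> U" if "u \<in> Ob C" "A' \<subseteq> A" "finite A'" "u \<in> gen C (\<Union>A')" for u A'
    using that unfolding U_def by blast
  have two: "\<exists>A'. A' \<subseteq> A \<and> finite A' \<and> a \<in> gen C (\<Union>A') \<and> b \<in> gen C (\<Union>A')"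
    if ab: "a \<in> U" "b \<in> U" for a b
  proof -
    obtain A1 where 1: "A1 \<subseteq> A" "finite A1" "a \<in> gen C (\<Union>A1)" using UiD[OF ab(1)] by blast
    obtain A2 where 2: "A2 \<subseteq> A" "finite A2" "b \<in> gen C (\<Union>A2)" using UiD[OF ab(2)] by blast
    have "A1 \<union> A2 \<subseteq> A" "finite (A1 \<union> A2)" using 1 2 by auto
    moreover have "a \<in> gen C (\<Union>(A1 \<union> A2))" using 1(3) mono1 by blast
    moreover have "b \<in> gen C (\<Union>(A1 \<union> A2))" using 2(3) mono2 by blast
    ultimately show ?thesis by blast
  qed
  have TU: "thick_tensor_ideal C U"
    unfolding TTI_iff TAs_def thick_def additive_subcat_def
  proof (intro conjI allI impI ballI)
    show "U \<subseteq> Ob C" using UiO by blast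
    show "U \<subseteq> Ob C" using UiO by blast
    fix a b c i p assume cf: "conflation C a b c i p"
    have o: "a \<in> Ob C" "b \<in> Ob C" "c \<in> Ob C" using conf_ob[OF cf] by auto
    show "b \<in> U \<longleftrightarrow> a \<in> U \<and> c \<in> U"
    proof
      assume "b \<in> U"
      then obtain A' where A': "A' \<subseteq> A" "finite A'" "b \<in> gen C (\<Union>A')" using UiD by blast
      have "b \<in> gen C (\<Union>A') \<longleftrightarrow> a \<in> gen C (\<Union>A') \<and> c \<in> gen C (\<Union>A')"
        using thick_conf[OF TTI_thick[OF T[OF A'(1)]] cf] .
      then have "a \<in> gen C (\<Union>A') \<and> c \<in> gen C (\<Union>A')" using A'(3) by blast
      then show "a \<in> U \<and> c \<in> U" using UiI[OF o(1) A'(1,2)] UiI[OF o(3) A'(1,2)] by blast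
    next
      assume "a \<in> U \<and> c \<in> U"
      then obtain A' where A': "A' \<subseteq> A" "finite A'" "a \<in> gen C (\<Union>A')" "c \<in> gen C (\<Union>A')"
        using two by blast
      have "b \<in> gen C (\<Union>A') \<longleftrightarrow> a \<in> gen C (\<Union>A') \<and> c \<in> gen C (\<Union>A')"
        using thick_conf[OF TTI_thick[OF T[OF A'(1)]] cf] .
      then have "b \<in> gen C (\<Union>A')" using A'(3,4) by blast
      then show "b \<in> U" using UiI[OF o(2) A'(1,2)] by blast
    qed
  next
    obtain z0 where z0: "is_zero_obj C z0" using zero_exists by blast
    have e: "{} \<subseteq> A" "finite {}" by auto
    have "z0 \<in> gen C (\<Union>{})" using TTI_zero[OF T[OF e(1)] z0] .
    then have "z0 \<in> U" using UiI[OF zero_ob[OF z0] e] by blast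
    then show "\<exists>z\<in>U. is_zero_obj C z" using z0 by blast
  next
    fix a b z i j assume h: "a \<in> U \<and> b \<in> U \<and> is_coprod C a b z i j"
    then obtain A' where A': "A' \<subseteq> A" "finite A'" "a \<in> gen C (\<Union>A')" "b \<in> gen C (\<Union>A')"
      using two by blast
    have "\<forall>a b z i j. a \<in> gen C (\<Union>A') \<and> b \<in> gen C (\<Union>A') \<and> is_coprod C a b z i j
       \<longrightarrow> z \<in> gen C (\<Union>A')"
      using T[OF A'(1)] unfolding TTI_iff TAs_def additive_subcat_def by blast
    then have "z \<in> gen C (\<Union>A')" using A'(3,4) h by blast
    moreover have "z \<in> Ob C" using h hom_ob2 unfolding is_coprod_def by blast
    ultimately show "z \<in> U" using UiI A'(1,2) by blast
  next
    fix u v assume uv: "u \<in> Ob C" "v \<in> Ob C" "u \<in> U \<or> v \<in> U"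
    then obtain A' where A': "A' \<subseteq> A" "finite A'" "u \<in> gen C (\<Union>A') \<or> v \<in> gen C (\<Union>A')"
      using UiD by blast
    then have "tob C u v \<in> gen C (\<Union>A')" using TTI_l[OF T[OF A'(1)]] TTI_r[OF T[OF A'(1)]] uv by blast
    then show "tob C u v \<in> U" using UiI[OF tob_ob[OF uv(1,2)] A'(1,2)] by blast
  qed
  have "\<Union>A \<subseteq> U"
  proof
    fix u assume "u \<in> \<Union>A"
    then obtain a where a: "a \<in> A" "u \<in> a" by blast
    have "a \<subseteq> \<Union>{a}" by blast
    then have "u \<in> gen C (\<Union>{a})" using gen_sub a(2) by blast
    moreover have "u \<in> Ob C" using a A TTI_sub L_mem by blast
    moreover have "{a} \<subseteq> A" "finite {a}" using a by auto
    ultimately show "u \<in> U" using UiI by blast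
  qed
  then have "gen C (\<Union>A) \<subseteq> U" using gen_least TU by blast
  then obtain A' where A': "A' \<subseteq> A" "finite A'" "x \<in> gen C (\<Union>A')" using xA UiD by blast
  have "gen C {x} \<subseteq> gen C (\<Union>A')" using gen_least T[OF A'(1)] A'(3) by blast
  also have "\<dots> = lsup (Lthick C) (\<subseteq>) A'"
  proof -
    have "A' \<subseteq> Lthick C" using A'(1) A by blast
    then show ?thesis using lsup_L by simp
  qed
  finally show "\<exists>A'. A' \<subseteq> A \<and> finite A' \<and> gen C {x} \<subseteq> lsup (Lthick C) (\<subseteq>) A'" using A' by blast
qed

lemma finite_gen_obj: assumes "finite F" "F \<subseteq> Ob C"
  shows "\<exists>w\<in>Ob C. \<forall>E. thick_tensor_ideal C E \<longrightarrow> (w \<in> E \<longleftrightarrow> F \<subseteq> E)"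
  using assms
proof (induction F rule: finite_induct)
  case empty
  obtain z0 where z0: "is_zero_obj C z0" using zero_exists by blast
  have "\<forall>E. thick_tensor_ideal C E \<longrightarrow> (z0 \<in> E \<longleftrightarrow> {} \<subseteq> E)" using TTI_zero[OF _ z0] by blast
  then show ?case using zero_ob[OF z0] by blast
next
  case (insert x F)
  then obtain w where w: "w \<in> Ob C" "\<forall>E. thick_tensor_ideal C E \<longrightarrow> (w \<in> E \<longleftrightarrow> F \<subseteq> E)" by blast
  have x: "x \<in> Ob C" using insert by blast
  obtain w' where w': "w' \<in> Ob C" "\<forall>D. thick C D \<longrightarrow> (w' \<in> D \<longleftrightarrow> x \<in> D \<and> w \<in> D)"
    using split_obj[OF x w(1)] by blast
  have "w' \<in> E \<longleftrightarrow> insert x F \<subseteq> E" if E: "thick_tensor_ideal C E" for E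
  proof -
    have "w' \<in> E \<longleftrightarrow> x \<in> E \<and> w \<in> E" using w'(2) TTI_thick[OF E] by blast
    also have "\<dots> \<longleftrightarrow> x \<in> E \<and> F \<subseteq> E" using w(2) E by blast
    finally show ?thesis by simp
  qed
  then show ?case using w'(1) by blast
qed

lemma compact_principal: assumes c: "compact_el (Lthick C) (\<subseteq>) D" shows "\<exists>x\<in>Ob C. D = gen C {x}"
proof -
  have "D \<in> Lthick C" using c unfolding compact_el_def by blast
  then have D: "thick_tensor_ideal C D" using L_mem by blast
  have DO: "D \<subseteq> Ob C" using TTI_sub[OF D] .
  let ?A = "(\<lambda>x. gen C {x}) ` D"
  have A: "?A \<subseteq> Lthick C"
  proof
    fix a assume "a \<in> ?A"
    then obtain x where x: "x \<in> D" "a = gen C {x}" by blast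
    then have "{x} \<subseteq> Ob C" using DO by blast
    then show "a \<in> Lthick C" using gen_TTI x(2) L_mem by blast
  qed
  have "D \<subseteq> \<Union>?A" using gen_sub by blast
  then have "D \<subseteq> gen C (\<Union>?A)" using gen_sub by blast
  then have "D \<subseteq> lsup (Lthick C) (\<subseteq>) ?A" using lsup_L[OF A] by simp
  then obtain A' where A': "A' \<subseteq> ?A" "finite A'" "D \<subseteq> lsup (Lthick C) (\<subseteq>) A'"
    using c A unfolding compact_el_def by blast
  obtain F where F: "F \<subseteq> D" "finite F" "A' = (\<lambda>x. gen C {x}) ` F"
    using finite_subset_image[OF A'(2) A'(1)] by blast
  have FO: "F \<subseteq> Ob C" using F(1) DO by blast
  have GF: "thick_tensor_ideal C (gen C F)" using gen_TTI[OF FO] .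
  have "\<Union>A' \<subseteq> gen C F"
  proof
    fix u assume "u \<in> \<Union>A'"
    then obtain x where x: "x \<in> F" "u \<in> gen C {x}" using F(3) by blast
    have "x \<in> gen C F" using x(1) gen_sub by blast
    then have "gen C {x} \<subseteq> gen C F" using gen_least[OF GF] by blast
    then show "u \<in> gen C F" using x(2) by blast
  qed
  then have "gen C (\<Union>A') \<subseteq> gen C F" using gen_least[OF GF] by blast
  moreover have "A' \<subseteq> Lthick C" using A'(1) A by blast
  then have "lsup (Lthick C) (\<subseteq>) A' = gen C (\<Union>A')" using lsup_L by blast
  ultimately have DF: "D \<subseteq> gen C F" using A'(3) by blast
  obtain w where w: "w \<in> Ob C" "\<forall>E. thick_tensor_ideal C E \<longrightarrow> (w \<in> E \<longleftrightarrow> F \<subseteq> E)"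
    using finite_gen_obj[OF F(2) FO] by blast
  have Gw: "thick_tensor_ideal C (gen C {w})" using gen_TTI w(1) by blast
  have "gen C {w} = gen C F"
  proof (rule TTI_eq[OF Gw GF])
    fix E assume E: "thick_tensor_ideal C E"
    have "gen C {w} \<subseteq> E \<longleftrightarrow> w \<in> E" using gen_le_iff[OF E] by blast
    also have "\<dots> \<longleftrightarrow> F \<subseteq> E" using w(2) E by blast
    also have "\<dots> \<longleftrightarrow> gen C F \<subseteq> E" using gen_le_iff[OF E] by blast
    finally show "gen C {w} \<subseteq> E \<longleftrightarrow> gen C F \<subseteq> E" .
  qed
  moreover have "w \<in> D" using w(2) D F(1) by blast
  then have "gen C {w} \<subseteq> D" using gen_least[OF D] by blast
  ultimately have "D = gen C {w}" using DF by blast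
  then show ?thesis using w(1) by blast
qed

lemma compact_iff: "compact_el (Lthick C) (\<subseteq>) D \<longleftrightarrow> (\<exists>x\<in>Ob C. D = gen C {x})"
  using compact_principal principal_compact by blast


definition R_set :: "'o set \<Rightarrow> 'o set \<Rightarrow> 'o set" where
  "R_set c E = {u \<in> Ob C. \<forall>z\<in>c. tob C u z \<in> E}"
definition L_set :: "'o set \<Rightarrow> 'o set \<Rightarrow> 'o set" where
  "L_set a E = {v \<in> Ob C. \<forall>x\<in>a. tob C x v \<in> E}"

lemma TTI_TAs: "thick_tensor_ideal C E \<Longrightarrow> TAs E" using TTI_iff by blast

lemma R_TTI: assumes E: "thick_tensor_ideal C E" and c: "thick_tensor_ideal C c"
  shows "thick_tensor_ideal C (R_set c E)"
  unfolding TTI_iff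
proof (intro conjI ballI impI)
  have eq: "R_set c E = {u \<in> Ob C. \<forall>z\<in>c. u \<in> {u \<in> Ob C. tob C u z \<in> E}}"
    unfolding R_set_def by blast
  have "TAs {u \<in> Ob C. tob C u z \<in> E}" if "z \<in> c" for z
    using TA_tob_r[OF TTI_TAs[OF E]] that TTI_sub[OF c] by blast
  then show "TAs (R_set c E)" unfolding eq by (rule TA_Inter)
next
  fix x y assume xy: "x \<in> Ob C" "y \<in> Ob C" "x \<in> R_set c E \<or> y \<in> R_set c E"
  have "tob C (tob C x y) z \<in> E" if z: "z \<in> c" for z
  proof -
    have zo: "z \<in> Ob C" using z TTI_sub[OF c] by blast
    have i: "iso C (asc C x y z) (tob C (tob C x y) z) (tob C x (tob C y z))" using asc_iso xy zo by blast
    have "tob C x (tob C y z) \<in> E"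
    proof (cases "x \<in> R_set c E")
      case True
      have "tob C y z \<in> c" using TTI_l[OF c xy(2) z] .
      then show ?thesis using True unfolding R_set_def by blast
    next
      case False
      then have "tob C y z \<in> E" using xy(3) z unfolding R_set_def by blast
      then show ?thesis using TTI_l[OF E xy(1)] by blast
    qed
    then show ?thesis using TTI_iso[OF E i] by blast
  qed
  then show "tob C x y \<in> R_set c E" unfolding R_set_def using tob_ob xy by blast
qed

lemma L_TTI: assumes E: "thick_tensor_ideal C E" and a: "thick_tensor_ideal C a"
  shows "thick_tensor_ideal C (L_set a E)"
  unfolding TTI_iff
proof (intro conjI ballI impI)
  have eq: "L_set a E = {u \<in> Ob C. \<forall>z\<in>a. u \<in> {u \<in> Ob C. tob C z u \<in> E}}"
    unfolding L_set_def by blast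
  have "TAs {u \<in> Ob C. tob C z u \<in> E}" if "z \<in> a" for z
    using TA_tob_l[OF TTI_TAs[OF E]] that TTI_sub[OF a] by blast
  then show "TAs (L_set a E)" unfolding eq by (rule TA_Inter)
next
  fix v w assume vw: "v \<in> Ob C" "w \<in> Ob C" "v \<in> L_set a E \<or> w \<in> L_set a E"
  have "tob C x (tob C v w) \<in> E" if x: "x \<in> a" for x
  proof -
    have xo: "x \<in> Ob C" using x TTI_sub[OF a] by blast
    have i: "iso C (asc C x v w) (tob C (tob C x v) w) (tob C x (tob C v w))" using asc_iso vw xo by blast
    have "tob C (tob C x v) w \<in> E"
    proof (cases "v \<in> L_set a E")
      case True
      then have "tob C x v \<in> E" using x unfolding L_set_def by blast
      then show ?thesis using TTI_r[OF E _ vw(2)] by blast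
    next
      case False
      then have w: "w \<in> L_set a E" using vw(3) by blast
      have "tob C x v \<in> a" using TTI_r[OF a x vw(1)] .
      then show ?thesis using w unfolding L_set_def by blast
    qed
    then show ?thesis using TTI_iso'[OF E i] by blast
  qed
  then show "tob C v w \<in> L_set a E" unfolding L_set_def using tob_ob vw by blast
qed

lemma R_sub_iff: "D \<subseteq> Ob C \<Longrightarrow> D \<subseteq> R_set c E \<longleftrightarrow> (\<forall>u\<in>D. \<forall>z\<in>c. tob C u z \<in> E)"
  unfolding R_set_def by blast
lemma L_sub_iff: "D \<subseteq> Ob C \<Longrightarrow> D \<subseteq> L_set a E \<longleftrightarrow> (\<forall>v\<in>D. \<forall>x\<in>a. tob C x v \<in> E)"
  unfolding L_set_def by blast

lemma tprod_sub: "tprod C a b \<subseteq> Ob C" using TTI_sub tprod_TTI by blast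

lemma trip_R: assumes E: "thick_tensor_ideal C E" and T: "thick_tensor_ideal C a" "thick_tensor_ideal C b"
   "thick_tensor_ideal C c"
  shows "tprod C (tprod C a b) c \<subseteq> E \<longleftrightarrow> (\<forall>x\<in>a. \<forall>y\<in>b. \<forall>z\<in>c. tob C (tob C x y) z \<in> E)"
proof -
  have O: "a \<subseteq> Ob C" "b \<subseteq> Ob C" "c \<subseteq> Ob C" using TTI_sub T by auto
  have "tprod C (tprod C a b) c \<subseteq> E \<longleftrightarrow> (\<forall>u\<in>tprod C a b. \<forall>z\<in>c. tob C u z \<in> E)"
    using tprod_le_iff[OF E tprod_sub O(3)] .
  also have "\<dots> \<longleftrightarrow> tprod C a b \<subseteq> R_set c E" using R_sub_iff[OF tprod_sub] by blast
  also have "\<dots> \<longleftrightarrow> (\<forall>x\<in>a. \<forall>y\<in>b. tob C x y \<in> R_set c E)"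
    using tprod_le_iff[OF R_TTI[OF E T(3)] O(1,2)] .
  also have "\<dots> \<longleftrightarrow> (\<forall>x\<in>a. \<forall>y\<in>b. \<forall>z\<in>c. tob C (tob C x y) z \<in> E)"
    unfolding R_set_def using O tob_ob by blast
  finally show ?thesis .
qed

lemma trip_L: assumes E: "thick_tensor_ideal C E" and T: "thick_tensor_ideal C a" "thick_tensor_ideal C b"
   "thick_tensor_ideal C c"
  shows "tprod C a (tprod C b c) \<subseteq> E \<longleftrightarrow> (\<forall>x\<in>a. \<forall>y\<in>b. \<forall>z\<in>c. tob C x (tob C y z) \<in> E)"
proof -
  have O: "a \<subseteq> Ob C" "b \<subseteq> Ob C" "c \<subseteq> Ob C" using TTI_sub T by auto
  have "tprod C a (tprod C b c) \<subseteq> E \<longleftrightarrow> (\<forall>x\<in>a. \<forall>v\<in>tprod C b c. tob C x v \<in> E)"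
    using tprod_le_iff[OF E O(1) tprod_sub] .
  also have "\<dots> \<longleftrightarrow> tprod C b c \<subseteq> L_set a E" using L_sub_iff[OF tprod_sub] by blast
  also have "\<dots> \<longleftrightarrow> (\<forall>y\<in>b. \<forall>z\<in>c. tob C y z \<in> L_set a E)"
    using tprod_le_iff[OF L_TTI[OF E T(1)] O(2,3)] .
  also have "\<dots> \<longleftrightarrow> (\<forall>x\<in>a. \<forall>y\<in>b. \<forall>z\<in>c. tob C x (tob C y z) \<in> E)"
    unfolding L_set_def using O tob_ob by blast
  finally show ?thesis .
qed

lemma tprod_assoc: assumes T: "thick_tensor_ideal C a" "thick_tensor_ideal C b" "thick_tensor_ideal C c"
  shows "tprod C (tprod C a b) c = tprod C a (tprod C b c)"
proof (rule TTI_eq[OF tprod_TTI tprod_TTI])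
  fix E assume E: "thick_tensor_ideal C E"
  have O: "a \<subseteq> Ob C" "b \<subseteq> Ob C" "c \<subseteq> Ob C" using TTI_sub T by auto
  have eq: "tob C (tob C x y) z \<in> E \<longleftrightarrow> tob C x (tob C y z) \<in> E" if "x \<in> a" "y \<in> b" "z \<in> c" for x y z
  proof -
    have i: "iso C (asc C x y z) (tob C (tob C x y) z) (tob C x (tob C y z))" using asc_iso O that by blast
    show ?thesis using TTI_iso[OF E i] TTI_iso'[OF E i] by blast
  qed
  show "tprod C (tprod C a b) c \<subseteq> E \<longleftrightarrow> tprod C a (tprod C b c) \<subseteq> E"
    unfolding trip_R[OF E T] trip_L[OF E T] using eq by blast
qed

lemma dist_l: assumes T: "thick_tensor_ideal C a" "thick_tensor_ideal C b" "thick_tensor_ideal C c"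
  shows "tprod C a (gen C (b \<union> c)) = gen C (tprod C a b \<union> tprod C a c)"
proof (rule TTI_eq[OF tprod_TTI gen_TTI])
  show "tprod C a b \<union> tprod C a c \<subseteq> Ob C" using tprod_sub by blast
  fix E assume E: "thick_tensor_ideal C E"
  have O: "a \<subseteq> Ob C" "b \<subseteq> Ob C" "c \<subseteq> Ob C" using TTI_sub T by auto
  have bc: "b \<union> c \<subseteq> Ob C" using O by blast
  have G: "gen C (b \<union> c) \<subseteq> Ob C" using TTI_sub[OF gen_TTI[OF bc]] .
  have "tprod C a (gen C (b \<union> c)) \<subseteq> E \<longleftrightarrow> (\<forall>x\<in>a. \<forall>v\<in>gen C (b \<union> c). tob C x v \<in> E)"
    using tprod_le_iff[OF E O(1) G] .
  also have "\<dots> \<longleftrightarrow> gen C (b \<union> c) \<subseteq> L_set a E" using L_sub_iff[OF G] by blast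
  also have "\<dots> \<longleftrightarrow> b \<union> c \<subseteq> L_set a E" using gen_le_iff[OF L_TTI[OF E T(1)]] .
  also have "\<dots> \<longleftrightarrow> (\<forall>v\<in>b \<union> c. \<forall>x\<in>a. tob C x v \<in> E)" using L_sub_iff[OF bc] .
  also have "\<dots> \<longleftrightarrow> (\<forall>x\<in>a. \<forall>y\<in>b. tob C x y \<in> E) \<and> (\<forall>x\<in>a. \<forall>y\<in>c. tob C x y \<in> E)"
    by blast
  also have "\<dots> \<longleftrightarrow> tprod C a b \<subseteq> E \<and> tprod C a c \<subseteq> E"
    unfolding tprod_le_iff[OF E O(1) O(2)] tprod_le_iff[OF E O(1) O(3)] ..
  also have "\<dots> \<longleftrightarrow> tprod C a b \<union> tprod C a c \<subseteq> E" by blast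
  also have "\<dots> \<longleftrightarrow> gen C (tprod C a b \<union> tprod C a c) \<subseteq> E" using gen_le_iff[OF E] by simp
  finally show "tprod C a (gen C (b \<union> c)) \<subseteq> E \<longleftrightarrow> gen C (tprod C a b \<union> tprod C a c) \<subseteq> E" .
qed

lemma dist_r: assumes T: "thick_tensor_ideal C a" "thick_tensor_ideal C b" "thick_tensor_ideal C c"
  shows "tprod C (gen C (a \<union> b)) c = gen C (tprod C a c \<union> tprod C b c)"
proof (rule TTI_eq[OF tprod_TTI gen_TTI])
  show "tprod C a c \<union> tprod C b c \<subseteq> Ob C" using tprod_sub by blast
  fix E assume E: "thick_tensor_ideal C E"
  have O: "a \<subseteq> Ob C" "b \<subseteq> Ob C" "c \<subseteq> Ob C" using TTI_sub T by auto
  have ab: "a \<union> b \<subseteq> Ob C" using O by blast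
  have G: "gen C (a \<union> b) \<subseteq> Ob C" using TTI_sub[OF gen_TTI[OF ab]] .
  have "tprod C (gen C (a \<union> b)) c \<subseteq> E \<longleftrightarrow> (\<forall>u\<in>gen C (a \<union> b). \<forall>z\<in>c. tob C u z \<in> E)"
    using tprod_le_iff[OF E G O(3)] .
  also have "\<dots> \<longleftrightarrow> gen C (a \<union> b) \<subseteq> R_set c E" using R_sub_iff[OF G] by blast
  also have "\<dots> \<longleftrightarrow> a \<union> b \<subseteq> R_set c E" using gen_le_iff[OF R_TTI[OF E T(3)]] .
  also have "\<dots> \<longleftrightarrow> (\<forall>u\<in>a \<union> b. \<forall>z\<in>c. tob C u z \<in> E)" using R_sub_iff[OF ab] .
  also have "\<dots> \<longleftrightarrow> (\<forall>x\<in>a. \<forall>y\<in>c. tob C x y \<in> E) \<and> (\<forall>x\<in>b. \<forall>y\<in>c. tob C x y \<in> E)"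
    by blast
  also have "\<dots> \<longleftrightarrow> tprod C a c \<subseteq> E \<and> tprod C b c \<subseteq> E"
    unfolding tprod_le_iff[OF E O(1) O(3)] tprod_le_iff[OF E O(2) O(3)] ..
  also have "\<dots> \<longleftrightarrow> tprod C a c \<union> tprod C b c \<subseteq> E" by blast
  also have "\<dots> \<longleftrightarrow> gen C (tprod C a c \<union> tprod C b c) \<subseteq> E" using gen_le_iff[OF E] by simp
  finally show "tprod C (gen C (a \<union> b)) c \<subseteq> E \<longleftrightarrow> gen C (tprod C a c \<union> tprod C b c) \<subseteq> E" .
qed

lemma unit_l: assumes a: "thick_tensor_ideal C a" shows "tprod C (Ob C) a = a"
proof (rule TTI_eq[OF tprod_TTI a])
  fix E assume E: "thick_tensor_ideal C E"
  have O: "a \<subseteq> Ob C" using TTI_sub a by auto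
  have "tprod C (Ob C) a \<subseteq> E \<longleftrightarrow> (\<forall>x\<in>Ob C. \<forall>y\<in>a. tob C x y \<in> E)"
    using tprod_le_iff[OF E _ O] by blast
  also have "\<dots> \<longleftrightarrow> a \<subseteq> E"
  proof
    assume h: "\<forall>x\<in>Ob C. \<forall>y\<in>a. tob C x y \<in> E"
    show "a \<subseteq> E"
    proof
      fix y assume y: "y \<in> a"
      then have yo: "y \<in> Ob C" using O by blast
      have "tob C (tunit C) y \<in> E" using h unit_ob y by blast
      then show "y \<in> E" using TTI_iso'[OF E lunit_iso[OF yo]] by blast
    qed
  next
    assume "a \<subseteq> E" then show "\<forall>x\<in>Ob C. \<forall>y\<in>a. tob C x y \<in> E" using TTI_l[OF E] by blast
  qed
  finally show "tprod C (Ob C) a \<subseteq> E \<longleftrightarrow> a \<subseteq> E" .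
qed

lemma unit_r: assumes a: "thick_tensor_ideal C a" shows "tprod C a (Ob C) = a"
proof (rule TTI_eq[OF tprod_TTI a])
  fix E assume E: "thick_tensor_ideal C E"
  have O: "a \<subseteq> Ob C" using TTI_sub a by auto
  have "tprod C a (Ob C) \<subseteq> E \<longleftrightarrow> (\<forall>x\<in>a. \<forall>y\<in>Ob C. tob C x y \<in> E)"
    using tprod_le_iff[OF E O] by blast
  also have "\<dots> \<longleftrightarrow> a \<subseteq> E"
  proof
    assume h: "\<forall>x\<in>a. \<forall>y\<in>Ob C. tob C x y \<in> E"
    show "a \<subseteq> E"
    proof
      fix y assume y: "y \<in> a"
      then have yo: "y \<in> Ob C" using O by blast
      have "tob C y (tunit C) \<in> E" using h unit_ob y by blast
      then show "y \<in> E" using TTI_iso'[OF E runit_iso[OF yo]] by blast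
    qed
  next
    assume "a \<subseteq> E" then show "\<forall>x\<in>a. \<forall>y\<in>Ob C. tob C x y \<in> E" using TTI_r[OF E] by blast
  qed
  finally show "tprod C a (Ob C) \<subseteq> E \<longleftrightarrow> a \<subseteq> E" .
qed

lemma top_gen: "Ob C = gen C {tunit C}"
proof
  show "gen C {tunit C} \<subseteq> Ob C" using TTI_sub gen_TTI unit_ob by blast
  have G: "thick_tensor_ideal C (gen C {tunit C})" using gen_TTI unit_ob by blast
  show "Ob C \<subseteq> gen C {tunit C}"
  proof
    fix x assume x: "x \<in> Ob C"
    have "tunit C \<in> gen C {tunit C}" using gen_sub by blast
    then have "tob C x (tunit C) \<in> gen C {tunit C}" using TTI_l[OF G x] by blast
    then show "x \<in> gen C {tunit C}" using TTI_iso'[OF G runit_iso[OF x]] by blast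
  qed
qed

lemma lsup_top: "lsup (Lthick C) (\<subseteq>) (Lthick C) = Ob C"
proof -
  have "\<Union>(Lthick C) = Ob C" using Ob_TTI TTI_sub L_mem by blast
  then show ?thesis using lsup_L[of "Lthick C"] gen_id[OF Ob_TTI] by simp
qed


lemma pp_iff: assumes E: "thick_tensor_ideal C E" and x: "x \<in> Ob C" and y: "y \<in> Ob C"
  shows "tprod C (gen C {x}) (gen C {y}) \<subseteq> E \<longleftrightarrow> (\<forall>u\<in>gen C {x}. tob C u y \<in> E)"
proof -
  have Gx: "thick_tensor_ideal C (gen C {x})" using gen_TTI x by blast
  have Gy: "thick_tensor_ideal C (gen C {y})" using gen_TTI y by blast
  have Ox: "gen C {x} \<subseteq> Ob C" using TTI_sub[OF Gx] .
  have Oy: "gen C {y} \<subseteq> Ob C" using TTI_sub[OF Gy] .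
  have "tprod C (gen C {x}) (gen C {y}) \<subseteq> E \<longleftrightarrow> (\<forall>u\<in>gen C {x}. \<forall>v\<in>gen C {y}. tob C u v \<in> E)"
    using tprod_le_iff[OF E Ox Oy] .
  also have "\<dots> \<longleftrightarrow> (\<forall>v\<in>gen C {y}. \<forall>u\<in>gen C {x}. tob C u v \<in> E)" by blast
  also have "\<dots> \<longleftrightarrow> gen C {y} \<subseteq> L_set (gen C {x}) E" using L_sub_iff[OF Oy] by simp
  also have "\<dots> \<longleftrightarrow> {y} \<subseteq> L_set (gen C {x}) E" using gen_le_iff[OF L_TTI[OF E Gx]] .
  also have "\<dots> \<longleftrightarrow> (\<forall>u\<in>gen C {x}. tob C u y \<in> E)" unfolding L_set_def using y by blast
  finally show ?thesis .
qed

lemma M_iff: assumes E: "thick_tensor_ideal C E" and x: "x \<in> Ob C" and y: "y \<in> Ob C"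
  shows "(\<forall>u\<in>gen C {x}. tob C u y \<in> E) \<longleftrightarrow> (\<forall>w\<in>Ob C. tob C (tob C x w) y \<in> E)"
proof
  assume h: "\<forall>u\<in>gen C {x}. tob C u y \<in> E"
  have Gx: "thick_tensor_ideal C (gen C {x})" using gen_TTI x by blast
  have "x \<in> gen C {x}" using gen_sub by blast
  then have "tob C x w \<in> gen C {x}" if "w \<in> Ob C" for w using TTI_r[OF Gx _ that] by blast
  then show "\<forall>w\<in>Ob C. tob C (tob C x w) y \<in> E" using h by blast
next
  assume h: "\<forall>w\<in>Ob C. tob C (tob C x w) y \<in> E"
  define S where "S = {v \<in> Ob C. tob C v y \<in> E}"
  have TS: "TAs S" unfolding S_def using TA_tob_r[OF TTI_TAs[OF E] y] .
  define M where "M = {u \<in> Ob C. \<forall>w\<in>Ob C. tob C (tob C u w) y \<in> E}"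
  have Meq: "M = {u \<in> Ob C. \<forall>w\<in>Ob C. u \<in> {u \<in> Ob C. tob C u w \<in> S}}"
    unfolding M_def S_def using tob_ob by blast
  have TM: "TAs M" unfolding Meq by (rule TA_Inter) (rule TA_tob_r[OF TS])
  have TTM: "thick_tensor_ideal C M" unfolding TTI_iff
  proof (intro conjI ballI impI TM)
    fix u v assume uv: "u \<in> Ob C" "v \<in> Ob C" "u \<in> M \<or> v \<in> M"
    have "tob C (tob C (tob C u v) w) y \<in> E" if w: "w \<in> Ob C" for w
    proof (cases "u \<in> M")
      case True
      have vw: "tob C v w \<in> Ob C" using tob_ob uv w by blast
      have "tob C (tob C u (tob C v w)) y \<in> E" using True vw unfolding M_def by blast
      moreover have "iso C (tmo C (asc C u v w) (idm C y)) (tob C (tob C (tob C u v) w) y) (tob C (tob C u (tob C v w)) y)"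
        using tmo_iso[OF asc_iso[OF uv(1,2) w] iso_id[OF y]] .
      ultimately show ?thesis using TTI_iso[OF E] by blast
    next
      case False
      then have vM: "v \<in> M" using uv by blast
      have uw: "tob C v w \<in> Ob C" using tob_ob uv w by blast
      have "tob C (tob C v w) y \<in> E" using vM w unfolding M_def by blast
      then have "tob C u (tob C (tob C v w) y) \<in> E" using TTI_l[OF E uv(1)] by blast
      moreover have "iso C (asc C u (tob C v w) y) (tob C (tob C u (tob C v w)) y) (tob C u (tob C (tob C v w) y))"
        using asc_iso[OF uv(1) uw y] .
      ultimately have "tob C (tob C u (tob C v w)) y \<in> E" using TTI_iso[OF E] by blast
      moreover have "iso C (tmo C (asc C u v w) (idm C y)) (tob C (tob C (tob C u v) w) y) (tob C (tob C u (tob C v w)) y)"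
        using tmo_iso[OF asc_iso[OF uv(1,2) w] iso_id[OF y]] .
      ultimately show ?thesis using TTI_iso[OF E] by blast
    qed
    then show "tob C u v \<in> M" unfolding M_def using tob_ob uv by blast
  qed
  have "x \<in> M" unfolding M_def using x h by blast
  then have GM: "gen C {x} \<subseteq> M" using gen_least[OF TTM] by blast
  show "\<forall>u\<in>gen C {x}. tob C u y \<in> E"
  proof
    fix u assume "u \<in> gen C {x}"
    then have u: "u \<in> M" using GM by blast
    then have uo: "u \<in> Ob C" unfolding M_def by blast
    have "tob C (tob C u (tunit C)) y \<in> E" using u unit_ob unfolding M_def by blast
    moreover have "iso C (tmo C (runit C u) (idm C y)) (tob C (tob C u (tunit C)) y) (tob C u y)"
      using tmo_iso[OF runit_iso[OF uo] iso_id[OF y]] .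
    ultimately show "tob C u y \<in> E" using TTI_iso'[OF E] by blast
  qed
qed

lemma gen_case: assumes E: "thick_tensor_ideal C E" and x: "x \<in> Ob C" and y: "y \<in> Ob C"
  and c: "c \<in> Ob C" and cg: "\<forall>D. thick C D \<and> c \<in> D \<longrightarrow> D = Ob C"
  shows "(\<forall>w\<in>Ob C. tob C (tob C x w) y \<in> E) \<longleftrightarrow> tob C (tob C x c) y \<in> E"
proof
  assume "\<forall>w\<in>Ob C. tob C (tob C x w) y \<in> E" then show "tob C (tob C x c) y \<in> E" using c by blast
next
  assume h: "tob C (tob C x c) y \<in> E"
  define S where "S = {v \<in> Ob C. tob C v y \<in> E}"
  have TS: "TAs S" unfolding S_def using TA_tob_r[OF TTI_TAs[OF E] y] .
  define T where "T = {w \<in> Ob C. tob C x w \<in> S}"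
  have TT: "TAs T" unfolding T_def using TA_tob_l[OF TS x] .
  have "c \<in> T" unfolding T_def S_def using c h tob_ob x by blast
  then have "T = Ob C" using cg TT unfolding TAs_def by blast
  then show "\<forall>w\<in>Ob C. tob C (tob C x w) y \<in> E" unfolding T_def S_def by blast
qed

lemma comm_case: assumes E: "thick_tensor_ideal C E" and x: "x \<in> Ob C" and y: "y \<in> Ob C"
  and cm: "tensor_commutative C"
  shows "(\<forall>w\<in>Ob C. tob C (tob C x w) y \<in> E) \<longleftrightarrow> tob C x y \<in> E"
proof
  assume "\<forall>w\<in>Ob C. tob C (tob C x w) y \<in> E"
  then have "tob C (tob C x (tunit C)) y \<in> E" using unit_ob by blast
  moreover have "iso C (tmo C (runit C x) (idm C y)) (tob C (tob C x (tunit C)) y) (tob C x y)"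
    using tmo_iso[OF runit_iso[OF x] iso_id[OF y]] .
  ultimately show "tob C x y \<in> E" using TTI_iso'[OF E] by blast
next
  assume h: "tob C x y \<in> E"
  obtain \<sigma> where s: "\<forall>x\<in>Ob C. \<forall>y\<in>Ob C. iso C (\<sigma> x y) (tob C x y) (tob C y x)"
    using cm unfolding tensor_commutative_def by blast
  show "\<forall>w\<in>Ob C. tob C (tob C x w) y \<in> E"
  proof
    fix w assume w: "w \<in> Ob C"
    have "tob C w (tob C x y) \<in> E" using TTI_l[OF E w h] .
    moreover have "iso C (asc C w x y) (tob C (tob C w x) y) (tob C w (tob C x y))" using asc_iso w x y by blast
    ultimately have "tob C (tob C w x) y \<in> E" using TTI_iso[OF E] by blast
    moreover have "iso C (tmo C (\<sigma> x w) (idm C y)) (tob C (tob C x w) y) (tob C (tob C w x) y)"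
      using tmo_iso[OF s[rule_format, OF x w] iso_id[OF y]] .
    ultimately show "tob C (tob C x w) y \<in> E" using TTI_iso[OF E] by blast
  qed
qed

lemma L5core: assumes hyp: "tensor_commutative C \<or> (\<exists>c\<in>Ob C. \<forall>D. thick C D \<and> c \<in> D \<longrightarrow> D = Ob C)"
  and x: "x \<in> Ob C" and y: "y \<in> Ob C"
  shows "\<exists>g\<in>Ob C. tprod C (gen C {x}) (gen C {y}) = gen C {g}"
proof -
  obtain g where g: "g \<in> Ob C" "\<forall>E. thick_tensor_ideal C E \<longrightarrow>
      ((\<forall>w\<in>Ob C. tob C (tob C x w) y \<in> E) \<longleftrightarrow> g \<in> E)"
  proof (cases "tensor_commutative C")
    case True
    show ?thesis by (rule that[of "tob C x y"]) (use comm_case[OF _ x y True] tob_ob x y in auto)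
  next
    case False
    then obtain c where c: "c \<in> Ob C" "\<forall>D. thick C D \<and> c \<in> D \<longrightarrow> D = Ob C" using hyp by blast
    show ?thesis by (rule that[of "tob C (tob C x c) y"]) (use gen_case[OF _ x y c] tob_ob x y c in auto)
  qed
  have "tprod C (gen C {x}) (gen C {y}) = gen C {g}"
  proof (rule TTI_eq[OF tprod_TTI gen_TTI])
    show "{g} \<subseteq> Ob C" using g by blast
    fix E assume E: "thick_tensor_ideal C E"
    have "tprod C (gen C {x}) (gen C {y}) \<subseteq> E \<longleftrightarrow> (\<forall>u\<in>gen C {x}. tob C u y \<in> E)" using pp_iff[OF E x y] .
    also have "\<dots> \<longleftrightarrow> (\<forall>w\<in>Ob C. tob C (tob C x w) y \<in> E)" using M_iff[OF E x y] .
    also have "\<dots> \<longleftrightarrow> g \<in> E" using g E by blast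
    also have "\<dots> \<longleftrightarrow> gen C {g} \<subseteq> E" using gen_le_iff[OF E] by blast
    finally show "tprod C (gen C {x}) (gen C {y}) \<subseteq> E \<longleftrightarrow> gen C {g} \<subseteq> E" .
  qed
  then show ?thesis using g by blast
qed

end


theorem mainTheorem13:
  fixes C :: "('o, 'm) tcat"
  assumes "exact_tensor_category C"
    and "tensor_commutative C \<or> (\<exists>c\<in>Ob C. \<forall>D. thick C D \<and> c \<in> D \<longrightarrow> D = Ob C)"
  shows "ideal_lattice (Lthick C) (\<subseteq>) (tprod C) \<and>
         (\<forall>D\<in>Lthick C. compact_el (Lthick C) (\<subseteq>) D \<longleftrightarrow> (\<exists>x\<in>Ob C. D = gen C {x}))"
proof -
  interpret ETC C using assms(1) by unfold_locales
  have A1: "poset_on (Lthick C) (\<subseteq>)" unfolding poset_on_def by blast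
  have A2: "\<forall>a\<in>Lthick C. \<forall>b\<in>Lthick C. tprod C a b \<in> Lthick C" using tprod_TTI L_mem by blast
  have A3: "\<forall>a\<in>Lthick C. \<forall>b\<in>Lthick C. \<forall>c\<in>Lthick C. tprod C (tprod C a b) c = tprod C a (tprod C b c)"
    using tprod_assoc L_mem by blast
  have A4: "\<forall>A. A \<subseteq> Lthick C \<longrightarrow> (\<exists>s. is_sup (Lthick C) (\<subseteq>) A s)" using sup_L by blast
  have A5: "\<forall>a\<in>Lthick C. \<exists>A. A \<subseteq> {c. compact_el (Lthick C) (\<subseteq>) c} \<and> a = lsup (Lthick C) (\<subseteq>) A"
  proof
    fix a assume a: "a \<in> Lthick C"
    then have Ta: "thick_tensor_ideal C a" using L_mem by blast
    have O: "a \<subseteq> Ob C" using TTI_sub[OF Ta] .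
    let ?A = "(\<lambda>x. gen C {x}) ` a"
    have c: "?A \<subseteq> {c. compact_el (Lthick C) (\<subseteq>) c}" using principal_compact O by blast
    have AL: "?A \<subseteq> Lthick C"
    proof
      fix b assume "b \<in> ?A"
      then obtain x where x: "x \<in> a" "b = gen C {x}" by blast
      then have "{x} \<subseteq> Ob C" using O by blast
      then show "b \<in> Lthick C" using gen_TTI x(2) L_mem by blast
    qed
    have "\<Union>?A \<subseteq> a" using gen_least[OF Ta] by blast
    then have "gen C (\<Union>?A) \<subseteq> a" using gen_least[OF Ta] by blast
    moreover have "a \<subseteq> \<Union>?A" using gen_sub by blast
    then have "a \<subseteq> gen C (\<Union>?A)" using gen_sub by blast
    ultimately have "a = lsup (Lthick C) (\<subseteq>) ?A" using lsup_L[OF AL] by blast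
    then show "\<exists>A. A \<subseteq> {c. compact_el (Lthick C) (\<subseteq>) c} \<and> a = lsup (Lthick C) (\<subseteq>) A" using c by blast
  qed
  have A6: "\<forall>a\<in>Lthick C. \<forall>b\<in>Lthick C. \<forall>c\<in>Lthick C.
        tprod C a (lsup (Lthick C) (\<subseteq>) {b, c}) = lsup (Lthick C) (\<subseteq>) {tprod C a b, tprod C a c} \<and>
        tprod C (lsup (Lthick C) (\<subseteq>) {a, b}) c = lsup (Lthick C) (\<subseteq>) {tprod C a c, tprod C b c}"
  proof (intro ballI conjI)
    fix a b c assume abc: "a \<in> Lthick C" "b \<in> Lthick C" "c \<in> Lthick C"
    then have T: "thick_tensor_ideal C a" "thick_tensor_ideal C b" "thick_tensor_ideal C c"
      using L_mem by auto
    have s1: "lsup (Lthick C) (\<subseteq>) {b, c} = gen C (b \<union> c)" using lsup_L[of "{b, c}"] abc by simp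
    have s2: "lsup (Lthick C) (\<subseteq>) {a, b} = gen C (a \<union> b)" using lsup_L[of "{a, b}"] abc by simp
    have p: "tprod C a b \<in> Lthick C" "tprod C a c \<in> Lthick C" "tprod C b c \<in> Lthick C"
      using A2 abc by auto
    have s3: "lsup (Lthick C) (\<subseteq>) {tprod C a b, tprod C a c} = gen C (tprod C a b \<union> tprod C a c)"
      using lsup_L[of "{tprod C a b, tprod C a c}"] p by simp
    have s4: "lsup (Lthick C) (\<subseteq>) {tprod C a c, tprod C b c} = gen C (tprod C a c \<union> tprod C b c)"
      using lsup_L[of "{tprod C a c, tprod C b c}"] p by simp
    show "tprod C a (lsup (Lthick C) (\<subseteq>) {b, c}) = lsup (Lthick C) (\<subseteq>) {tprod C a b, tprod C a c}"
      unfolding s1 s3 using dist_l[OF T] .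
    show "tprod C (lsup (Lthick C) (\<subseteq>) {a, b}) c = lsup (Lthick C) (\<subseteq>) {tprod C a c, tprod C b c}"
      unfolding s2 s4 using dist_r[OF T] .
  qed
  have A7: "compact_el (Lthick C) (\<subseteq>) (lsup (Lthick C) (\<subseteq>) (Lthick C))"
    unfolding lsup_top using top_gen principal_compact[OF unit_ob] by simp
  have A8: "\<forall>a\<in>Lthick C. tprod C (lsup (Lthick C) (\<subseteq>) (Lthick C)) a = a \<and> tprod C a (lsup (Lthick C) (\<subseteq>) (Lthick C)) = a"
    unfolding lsup_top using unit_l unit_r L_mem by blast
  have A9: "\<forall>a b. compact_el (Lthick C) (\<subseteq>) a \<and> compact_el (Lthick C) (\<subseteq>) b \<longrightarrow>
      compact_el (Lthick C) (\<subseteq>) (tprod C a b)"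
  proof (intro allI impI)
    fix a b assume "compact_el (Lthick C) (\<subseteq>) a \<and> compact_el (Lthick C) (\<subseteq>) b"
    then obtain x y where xy: "x \<in> Ob C" "a = gen C {x}" "y \<in> Ob C" "b = gen C {y}"
      using compact_iff by meson
    obtain g where g: "g \<in> Ob C" "tprod C (gen C {x}) (gen C {y}) = gen C {g}"
      using L5core[OF assms(2) xy(1,3)] by blast
    show "compact_el (Lthick C) (\<subseteq>) (tprod C a b)" using xy g principal_compact by simp
  qed
  have "ideal_lattice (Lthick C) (\<subseteq>) (tprod C)"
    unfolding ideal_lattice_def using A1 A2 A3 A4 A5 A6 A7 A8 A9 by blast
  moreover have "\<forall>D\<in>Lthick C. compact_el (Lthick C) (\<subseteq>) D \<longleftrightarrow> (\<exists>x\<in>Ob C. D = gen C {x})"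
    using compact_iff by blast
  ultimately show ?thesis by blast
qed

end
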